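(* Let $\mathbb{H}=\{z\in\mathbb{C}:\operatorname{Im} z>0\}$ and let $\Phi:\mathbb{H}\to\mathbb{H}$ be holomorphic of hyperbolic type with Denjoy–Wolff point $\infty$, i.e. $A:=\inf_{z\in\mathbb{H}}\frac{\operatorname{Im}\Phi(z)}{\operatorname{Im} z}>1$. Suppose $\sigma:\mathbb{H}\to\mathbb{H}$ is holomorphic and satisfies $\sigma\circ\Phi=A\sigma$ on $\mathbb{H}$. Then $\sigma$ has non-tangential limit $\infty$ at $\infty$, it is semi-conformal at $\infty$, i.e. \[ \operatorname{K-lim}_{z\to\infty}\operatorname{Arg}\frac{\sigma(z)}{z}=0, \] and every other holomorphic map $\tilde\sigma:\mathbb{H}\to\mathbb{H}$ satisfying $\tilde\sigma\circ\Phi=A\tilde\sigma$ is of the form $\tilde\sigma=\mu\sigma$ for some constant $\mu>0$.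
   Context: For a function $f$ on $\mathbb{H}$, $\operatorname{K-lim}_{z\to\infty}f(z)=L$ (non-tangential limit) means that $f(z)\to L$ as $z\to\infty$ within every sector $\{|\operatorname{Arg} z-\pi/2|<\pi/2-\delta\}$, $\delta>0$. $\operatorname{Arg}$ denotes the principal argument. *)

theory Defs
  imports "HOL-Complex_Analysis.Complex_Analysis"
begin

definition upper_half_plane :: "complex set" ("\<bbbH>") where
  "upper_half_plane = {z. Im z > 0}"

definition sector :: "real \<Rightarrow> complex set" where
  "sector \<delta> = {z. \<bar>Arg z - pi/2\<bar> < pi/2 - \<delta>}"

definition sector_at_infinity :: "real \<Rightarrow> complex filter" where
  "sector_at_infinity \<delta> = inf at_infinity (principal (sector \<delta>))"

definition Klim_infinity :: "(complex \<Rightarrow> 'a::topological_space) \<Rightarrow> 'a \<Rightarrow> bool" where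
  "Klim_infinity f L \<longleftrightarrow> (\<forall>\<delta>>0. (f \<longlongrightarrow> L) (sector_at_infinity \<delta>))"

definition Klim_infinity_infinity :: "(complex \<Rightarrow> complex) \<Rightarrow> bool" where
  "Klim_infinity_infinity f \<longleftrightarrow> (\<forall>\<delta>>0. filterlim f at_infinity (sector_at_infinity \<delta>))"

end

theory Submission
  imports Defs
begin

lemma norm_sub_cnj_sq:
  fixes p q :: complex
  shows "(cmod (p - cnj q))^2 = (cmod (p - q))^2 + 4 * Im p * Im q"
  unfolding cmod_power2 by (simp add: algebra_simps power2_eq_square)

lemma disc_lt1:
  fixes w a :: complex
  assumes "Im w > 0" "Im a > 0"
  shows "cmod ((w - a) / (w - cnj a)) < 1"
proof -
  have "(cmod (w - a))^2 < (cmod (w - cnj a))^2"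
    using norm_sub_cnj_sq[of w a] assms by (simp add: mult_pos_pos)
  then have "cmod (w - a) < cmod (w - cnj a)"
    by (meson norm_ge_zero power_less_imp_less_base)
  moreover have "w - cnj a \<noteq> 0" proof
    assume "w - cnj a = 0"
    then have "Im (w - cnj a) = 0" by simp
    then show False using assms by simp
  qed
  ultimately show ?thesis by (simp add: norm_divide divide_less_eq)
qed

lemma Im_moeb:
  fixes z0 u :: complex
  assumes "cmod u < 1"
  shows "Im ((z0 - cnj z0 * u) / (1 - u)) = Im z0 * (1 - (cmod u)^2) / (cmod (1 - u))^2"
  unfolding cmod_power2 by (simp add: Im_divide algebra_simps power2_eq_square)

lemma SP:
  assumes hol: "f holomorphic_on \<bbbH>" and maps: "f ` \<bbbH> \<subseteq> \<bbbH>"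
    and z0: "z0 \<in> \<bbbH>" and z: "z \<in> \<bbbH>"
  shows "(cmod (f z - f z0))^2 * (Im z * Im z0) \<le> (cmod (z - z0))^2 * (Im (f z) * Im (f z0))"
proof -
  define a where "a = f z0"
  have a: "Im a > 0" using maps z0 by (auto simp: a_def upper_half_plane_def)
  have z0': "Im z0 > 0" and z': "Im z > 0" using z0 z by (auto simp: upper_half_plane_def)
  have fz: "Im (f z) > 0" using maps z by (auto simp: upper_half_plane_def)
  define M where "M u = (z0 - cnj z0 * u) / (1 - u)" for u
  define g where "g u = (f (M u) - a) / (f (M u) - cnj a)" for u
  have MH: "M u \<in> \<bbbH>" if "cmod u < 1" for u
  proof -
    have "u \<noteq> 1" using that by auto
    then have "cmod (1 - u) > 0" by simp
    moreover have "(cmod u)^2 < 1" using that by (simp add: abs_square_less_1)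
    ultimately show ?thesis using Im_moeb[OF that, of z0] z0'
      by (simp add: M_def upper_half_plane_def)
  qed
  have holM: "M holomorphic_on ball 0 1"
    unfolding M_def by (intro holomorphic_intros) auto
  have den: "f (M u) - cnj a \<noteq> 0" if "cmod u < 1" for u
  proof
    assume "f (M u) - cnj a = 0"
    then have "Im (f (M u) - cnj a) = 0" by simp
    moreover have "Im (f (M u)) > 0" using maps MH[OF that] by (auto simp: upper_half_plane_def)
    ultimately show False using a by simp
  qed
  have holfM: "(f \<circ> M) holomorphic_on ball 0 1"
    by (rule holomorphic_on_compose_gen[OF holM hol]) (use MH in auto)
  have holg: "g holomorphic_on ball 0 1"
    unfolding g_def using holfM den by (intro holomorphic_intros) (auto simp: o_def)
  have g0: "g 0 = 0" by (simp add: g_def M_def a_def)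
  have gno: "cmod (g u) < 1" if "cmod u < 1" for u
    unfolding g_def using disc_lt1[OF _ a] maps MH[OF that] by (auto simp: upper_half_plane_def)
  define u where "u = (z - z0) / (z - cnj z0)"
  have u1: "cmod u < 1" unfolding u_def using disc_lt1 z' z0' by auto
  have d1: "z - cnj z0 \<noteq> 0"
  proof
    assume "z - cnj z0 = 0" then have "Im (z - cnj z0) = 0" by simp
    then show False using z' z0' by simp
  qed
  have d2: "z0 - cnj z0 \<noteq> 0"
  proof
    assume "z0 - cnj z0 = 0" then have "Im (z0 - cnj z0) = 0" by simp
    then show False using z0' by simp
  qed
  have Mu: "M u = z"
  proof -
    have "1 - u = (z0 - cnj z0) / (z - cnj z0)" unfolding u_def using d1 by (simp add: field_simps)
    moreover have "z0 - cnj z0 * u = z * (z0 - cnj z0) / (z - cnj z0)" unfolding u_def using d1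
      by (simp add: field_simps)
    ultimately show ?thesis unfolding M_def using d1 d2 by simp
  qed
  have "cmod (g u) \<le> cmod u"
    using Schwarz_Lemma(1)[OF holg g0 gno u1] by simp
  then have le: "cmod ((f z - a) / (f z - cnj a)) \<le> cmod ((z - z0) / (z - cnj z0))"
    unfolding g_def Mu by (simp add: u_def)
  have d3: "f z - cnj a \<noteq> 0"
  proof
    assume "f z - cnj a = 0" then have "Im (f z - cnj a) = 0" by simp
    then show False using fz a by simp
  qed
  have "cmod (f z - a) * cmod (z - cnj z0) \<le> cmod (z - z0) * cmod (f z - cnj a)"
  proof -
    have p1: "cmod (z - cnj z0) > 0" "cmod (f z - cnj a) > 0" using d1 d3 by auto
    show ?thesis using le p1 by (simp add: norm_divide field_simps)
  qed
  then have "(cmod (f z - a) * cmod (z - cnj z0))^2 \<le> (cmod (z - z0) * cmod (f z - cnj a))^2"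
    by (simp add: power_mono)
  then have "(cmod (f z - a))^2 * ((cmod (z - z0))^2 + 4 * Im z * Im z0)
       \<le> (cmod (z - z0))^2 * ((cmod (f z - a))^2 + 4 * Im (f z) * Im a)"
    by (simp add: power_mult_distrib norm_sub_cnj_sq)
  then show ?thesis unfolding a_def by (simp add: algebra_simps)
qed

lemma H_open: "open \<bbbH>" unfolding upper_half_plane_def by (rule open_halfspace_Im_gt)
lemma H_connected: "connected \<bbbH>" unfolding upper_half_plane_def by (rule connected_halfspace_Im_gt)
lemma in_H: "z \<in> \<bbbH> \<longleftrightarrow> Im z > 0" by (simp add: upper_half_plane_def)

lemma SP_scaled:
  assumes hol: "f holomorphic_on \<bbbH>" and maps: "f ` \<bbbH> \<subseteq> \<bbbH>"
    and R: "R > 0" and N: "N > 0" and v: "v \<in> \<bbbH>" and w: "w \<in> \<bbbH>"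
  shows "(cmod (f (of_real R * v) / of_real N - f (of_real R * w) / of_real N))^2 * (Im v * Im w)
     \<le> (cmod (v - w))^2 * (Im (f (of_real R * v) / of_real N) * Im (f (of_real R * w) / of_real N))"
proof -
  have Rv: "of_real R * v \<in> \<bbbH>" and Rw: "of_real R * w \<in> \<bbbH>" using v w R by (auto simp: in_H)
  have "(cmod (f (of_real R * v) - f (of_real R * w)))^2 * (Im (of_real R * v) * Im (of_real R * w))
     \<le> (cmod (of_real R * v - of_real R * w))^2 * (Im (f (of_real R * v)) * Im (f (of_real R * w)))"
    by (rule SP[OF hol maps Rw Rv])
  moreover have "cmod (of_real R * v - of_real R * w) = R * cmod (v - w)"
    using R by (simp add: right_diff_distrib[symmetric] norm_mult)
  ultimately have "(cmod (f (of_real R * v) - f (of_real R * w)))^2 * ((R * Im v) * (R * Im w))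
     \<le> (R * cmod (v - w))^2 * (Im (f (of_real R * v)) * Im (f (of_real R * w)))"
    by simp
  then have "R^2 * ((cmod (f (of_real R * v) - f (of_real R * w)))^2 * (Im v * Im w))
     \<le> R^2 * ((cmod (v - w))^2 * (Im (f (of_real R * v)) * Im (f (of_real R * w))))"
    by (simp add: power2_eq_square algebra_simps)
  then have "(cmod (f (of_real R * v) - f (of_real R * w)))^2 * (Im v * Im w)
     \<le> (cmod (v - w))^2 * (Im (f (of_real R * v)) * Im (f (of_real R * w)))"
    using R by simp
  then have "(cmod (f (of_real R * v) - f (of_real R * w)))^2 * (Im v * Im w) / N^2
     \<le> (cmod (v - w))^2 * (Im (f (of_real R * v)) * Im (f (of_real R * w))) / N^2"
    using N by (simp add: divide_right_mono)
  moreover have "cmod (f (of_real R * v) / of_real N - f (of_real R * w) / of_real N)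
     = cmod (f (of_real R * v) - f (of_real R * w)) / N"
    using N by (simp add: diff_divide_distrib[symmetric] norm_divide)
  ultimately show ?thesis using N
    by (simp add: power_divide algebra_simps Im_divide_of_real power2_eq_square)
qed

lemma bound_pt:
  fixes a b :: complex
  assumes "D \<ge> 0" "(cmod (b - a))^2 \<le> D * (Im b * Im a)" "Im a > 0" "Im b > 0"
  shows "cmod b \<le> (2 + D) * cmod a"
proof (rule ccontr)
  assume c: "\<not> ?thesis"
  have ia: "Im a \<le> cmod a" "Im b \<le> cmod b" using abs_Im_le_cmod[of a] abs_Im_le_cmod[of b] by linarith+
  have "(cmod b - cmod a)^2 \<le> (cmod (b - a))^2"
  proof -
    have "\<bar>cmod b - cmod a\<bar> \<le> cmod (b - a)" by (rule norm_triangle_ineq3)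
    then show ?thesis by (metis abs_ge_zero power2_abs power_mono)
  qed
  also have "\<dots> \<le> D * (cmod b * cmod a)"
  proof -
    have "Im b * Im a \<le> cmod b * cmod a" by (rule mult_mono) (use ia assms in auto)
    then have "D * (Im b * Im a) \<le> D * (cmod b * cmod a)" using assms(1) by (rule mult_left_mono)
    then show ?thesis using assms(2) by linarith
  qed
  finally have *: "(cmod b - cmod a)^2 \<le> D * (cmod b * cmod a)" .
  have "cmod b > (2 + D) * cmod a" using c by simp
  moreover have "cmod a \<ge> 0" by simp
  ultimately have t: "cmod b > 0" "cmod b - (2 + D) * cmod a > 0" using assms(1)
    by (smt (verit) mult_nonneg_nonneg)+
  then have "cmod b * (cmod b - (2 + D) * cmod a) > 0" by simp
  moreover have "(cmod b - cmod a)^2 - D * (cmod b * cmod a) = cmod b * (cmod b - (2 + D) * cmod a) + (cmod a)^2"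
    by (simp add: power2_eq_square algebra_simps)
  moreover have "(cmod a)^2 \<ge> 0" by simp
  ultimately show False using * by linarith
qed

lemma montel_H:
  fixes F :: "nat \<Rightarrow> complex \<Rightarrow> complex"
  assumes hol: "\<And>k. F k holomorphic_on \<bbbH>"
    and bd: "\<And>k v. v \<in> \<bbbH> \<Longrightarrow> cmod (F k v) \<le> C * (2 + (cmod (v - \<i>))^2 / Im v)"
  obtains G r where "G holomorphic_on \<bbbH>" "strict_mono r"
    "\<And>v. v \<in> \<bbbH> \<Longrightarrow> (\<lambda>k. F (r k) v) \<longlonglongrightarrow> G v"
    "\<And>K. compact K \<Longrightarrow> K \<subseteq> \<bbbH> \<Longrightarrow> uniform_limit K (F \<circ> r) G sequentially"
proof -
  have bnd: "\<exists>B. \<forall>h\<in>range F. \<forall>z\<in>K. cmod (h z) \<le> B" if "compact K" "K \<subseteq> \<bbbH>" for K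
  proof -
    have "continuous_on K (\<lambda>v. C * (2 + (cmod (v - \<i>))^2 / Im v))"
      using that(2) by (intro continuous_intros) (auto simp: in_H)
    then have "compact ((\<lambda>v. C * (2 + (cmod (v - \<i>))^2 / Im v)) ` K)"
      using that(1) by (rule compact_continuous_image)
    then obtain B where "\<forall>x\<in>(\<lambda>v. C * (2 + (cmod (v - \<i>))^2 / Im v)) ` K. norm x \<le> B"
      using compact_imp_bounded bounded_iff by metis
    then have B': "\<forall>v\<in>K. C * (2 + (cmod (v - \<i>))^2 / Im v) \<le> B"
    proof (intro ballI)
      fix v assume "\<forall>x\<in>(\<lambda>v. C * (2 + (cmod (v - \<i>))^2 / Im v)) ` K. norm x \<le> B" "v \<in> K"
      then have "norm (C * (2 + (cmod (v - \<i>))^2 / Im v)) \<le> B" by blast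
      then show "C * (2 + (cmod (v - \<i>))^2 / Im v) \<le> B" by simp
    qed
    have "\<forall>h\<in>range F. \<forall>z\<in>K. cmod (h z) \<le> B"
    proof clarify
      fix k z assume "z \<in> K"
      then have "z \<in> \<bbbH>" using that(2) by auto
      have "C * (2 + (cmod (z - \<i>))^2 / Im z) \<le> B" using B' \<open>z \<in> K\<close> by blast
      then show "cmod (F k z) \<le> B" using bd[OF \<open>z \<in> \<bbbH>\<close>, of k] by linarith
    qed
    then show ?thesis by blast
  qed
  obtain G r where m: "G holomorphic_on \<bbbH>" "strict_mono r"
    "\<And>x. x \<in> \<bbbH> \<Longrightarrow> (\<lambda>n. F (r n) x) \<longlonglongrightarrow> G x"
    "\<And>K. compact K \<Longrightarrow> K \<subseteq> \<bbbH> \<Longrightarrow> uniform_limit K (F \<circ> r) G sequentially"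
    by (rule Montel[OF H_open, of "range F" F]) (use hol bnd in auto)
  show ?thesis by (rule that[OF m(1) m(2) m(3) m(4)])
qed

lemma ulim_seq:
  fixes F :: "nat \<Rightarrow> complex \<Rightarrow> complex"
  assumes ul: "uniform_limit K F G sequentially" and w: "w \<longlonglongrightarrow> w0"
    and ev: "\<forall>\<^sub>F k in sequentially. w k \<in> K" and c: "isCont G w0"
  shows "(\<lambda>k. F k (w k)) \<longlonglongrightarrow> G w0"
proof -
  have "(\<lambda>k. G (w k)) \<longlonglongrightarrow> G w0" using c w by (rule isCont_tendsto_compose)
  moreover have "(\<lambda>k. F k (w k) - G (w k)) \<longlonglongrightarrow> 0"
  proof (rule tendstoI)
    fix e :: real assume e: "e > 0"
    have "\<forall>\<^sub>F k in sequentially. \<forall>x\<in>K. dist (F k x) (G x) < e"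
      using ul e by (simp add: uniform_limit_iff)
    then show "\<forall>\<^sub>F k in sequentially. dist (F k (w k) - G (w k)) 0 < e"
      using ev by eventually_elim (auto simp: dist_norm)
  qed
  ultimately have "(\<lambda>k. (F k (w k) - G (w k)) + G (w k)) \<longlonglongrightarrow> 0 + G w0"
    by (intro tendsto_add)
  then show ?thesis by simp
qed

lemma subseq_crit:
  fixes x :: "nat \<Rightarrow> 'a::metric_space"
  assumes "\<And>r::nat\<Rightarrow>nat. strict_mono r \<Longrightarrow> \<exists>r'::nat\<Rightarrow>nat. strict_mono r' \<and> (x \<circ> r \<circ> r') \<longlonglongrightarrow> L"
  shows "x \<longlonglongrightarrow> L"
proof (rule ccontr)
  assume "\<not> x \<longlonglongrightarrow> L"
  then obtain e where e: "e > 0" and fr: "\<forall>N. \<exists>n\<ge>N. dist (x n) L \<ge> e"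
    unfolding lim_sequentially by (auto simp: not_less)
  have "infinite {n. dist (x n) L \<ge> e}"
    using fr by (auto simp: infinite_nat_iff_unbounded_le)
  then obtain r :: "nat \<Rightarrow> nat" where r: "strict_mono r" "\<And>n. dist (x (r n)) L \<ge> e"
    using infinite_enumerate by blast
  obtain r' where r': "strict_mono r'" "(x \<circ> r \<circ> r') \<longlonglongrightarrow> L" using assms[OF r(1)] by blast
  then obtain N where "\<forall>n\<ge>N. dist ((x \<circ> r \<circ> r') n) L < e" using e unfolding lim_sequentially by blast
  then have "dist (x (r (r' N))) L < e" by simp
  with r(2)[of "r' N"] show False by linarith
qed

lemma nonneg_Im_const:
  assumes hol: "g holomorphic_on \<bbbH>" and nn: "\<And>v. v \<in> \<bbbH> \<Longrightarrow> Im (g v) \<ge> 0"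
    and v0: "v0 \<in> \<bbbH>" and z: "Im (g v0) = 0" and v: "v \<in> \<bbbH>"
  shows "g v = g v0"
proof (cases "g constant_on \<bbbH>")
  case True
  then obtain c where "\<And>x. x \<in> \<bbbH> \<Longrightarrow> g x = c" by (auto simp: constant_on_def)
  then show ?thesis using v v0 by simp
next
  case False
  have "open (g ` \<bbbH>)"
    by (rule open_mapping_thm[OF hol H_open H_connected H_open order_refl False])
  moreover have "g v0 \<in> g ` \<bbbH>" using v0 by simp
  ultimately obtain e where e: "e > 0" "ball (g v0) e \<subseteq> g ` \<bbbH>"
    by (meson openE)
  have "g v0 - \<i> * of_real (e/2) \<in> ball (g v0) e" using e by (simp add: dist_norm norm_mult)
  with e(2) have "g v0 - \<i> * of_real (e/2) \<in> g ` \<bbbH>" by (rule subsetD)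
  then obtain u where "g v0 - \<i> * of_real (e/2) = g u" "u \<in> \<bbbH>" by (rule imageE)
  then have "Im (g u) = Im (g v0 - \<i> * of_real (e/2))" by simp
  also have "\<dots> = - e/2" using z by simp
  finally have "Im (g u) = - e/2" .
  with nn[OF \<open>u \<in> \<bbbH>\<close>] e show ?thesis by simp
qed

lemma A_lower:
  assumes maps: "\<Phi> ` \<bbbH> \<subseteq> \<bbbH>" and A_def: "A = (INF z\<in>\<bbbH>. Im (\<Phi> z) / Im z)" and z: "z \<in> \<bbbH>"
  shows "A \<le> Im (\<Phi> z) / Im z"
proof -
  have "bdd_below ((\<lambda>z. Im (\<Phi> z) / Im z) ` \<bbbH>)"
  proof (rule bdd_belowI[of _ 0])
    fix x assume "x \<in> (\<lambda>z. Im (\<Phi> z) / Im z) ` \<bbbH>"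
    then obtain w where w: "w \<in> \<bbbH>" "x = Im (\<Phi> w) / Im w" by blast
    then have "\<Phi> w \<in> \<bbbH>" using maps by blast
    then show "0 \<le> x" using w by (simp add: in_H)
  qed
  then show ?thesis unfolding A_def using z by (rule cINF_lower)
qed

lemma A_greatest:
  assumes A_def: "A = (INF z\<in>\<bbbH>. Im (\<Phi> z) / Im z)" and c: "\<And>z. z \<in> \<bbbH> \<Longrightarrow> c \<le> Im (\<Phi> z) / Im z"
  shows "c \<le> A"
proof -
  have "\<bbbH> \<noteq> {}" using in_H[of \<i>] by auto
  then show ?thesis unfolding A_def by (rule cINF_greatest) (rule c)
qed

lemma quad_bound:
  fixes a b D :: real
  assumes "a > 0" "b \<ge> 0" "(a - b)^2 \<le> D * (a * b)"
  shows "a \<le> (2 + D) * b"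
proof -
  have "a * a \<le> ((2 + D) * b) * a"
  proof -
    have "(a - b)^2 = a * a - 2 * (a * b) + b * b" by (simp add: power2_eq_square algebra_simps)
    moreover have "b * b \<ge> 0" by simp
    moreover have "((2 + D) * b) * a = 2 * (a*b) + D * (a*b)" by (simp add: algebra_simps)
    ultimately show ?thesis using assms(3) by linarith
  qed
  then show ?thesis using assms(1) by (simp add: mult_right_le_imp_le)
qed

lemma iR_bound:
  assumes hol: "f holomorphic_on \<bbbH>" and maps: "f ` \<bbbH> \<subseteq> \<bbbH>"
  obtains C where "C \<ge> 0" "\<And>R. R \<ge> 1 \<Longrightarrow> cmod (f (of_real R * \<i>)) \<le> C * R"
proof -
  define a where "a = cmod (f \<i>)"
  define b where "b = Im (f \<i>)"
  have iH: "\<i> \<in> \<bbbH>" by (simp add: in_H)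
  have "f \<i> \<in> \<bbbH>" using maps iH by blast
  then have b0: "b > 0" by (simp add: b_def in_H)
  have a0: "a \<ge> 0" by (simp add: a_def)
  have main: "cmod (f (of_real R * \<i>)) \<le> (2*a + 4*b) * R" if R: "R \<ge> 1" for R
  proof -
    define w where "w = f (of_real R * \<i>)"
    define X where "X = cmod w"
    define Y where "Y = cmod (w - f \<i>)"
    have RH: "of_real R * \<i> \<in> \<bbbH>" using R by (simp add: in_H)
    have "w \<in> \<bbbH>" unfolding w_def using maps RH by blast
    then have wH: "Im w > 0" by (simp add: in_H)
    have sp: "(cmod (w - f \<i>))^2 * (Im (of_real R * \<i>) * Im \<i>) \<le> (cmod (of_real R * \<i> - \<i>))^2 * (Im w * Im (f \<i>))"
      unfolding w_def by (rule SP[OF hol maps iH RH])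
    have e2: "cmod (of_real R * \<i> - \<i>) = R - 1"
    proof -
      have "cmod (of_real R * \<i> - \<i>) = cmod (of_real (R - 1) * \<i>)" by (simp add: algebra_simps)
      also have "\<dots> = \<bar>R - 1\<bar>" by (simp only: norm_mult norm_of_real norm_ii) simp
      finally show ?thesis using R by simp
    qed
    have "Y^2 * R \<le> (R - 1)^2 * (Im w * b)" using sp e2 by (simp add: Y_def b_def)
    also have "\<dots> \<le> R^2 * (X * b)"
    proof (rule mult_mono)
      show "(R - 1)^2 \<le> R^2" using R by (simp add: power_mono)
      show "Im w * b \<le> X * b" using b0 abs_Im_le_cmod[of w] by (simp add: X_def)
    qed (use b0 R X_def wH in auto)
    finally have "R * Y^2 \<le> R * (R * X * b)" by (simp add: power2_eq_square algebra_simps)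
    then have Y2: "Y^2 \<le> R * X * b" using R by simp
    have XY: "X - a \<le> Y" unfolding X_def Y_def a_def by (rule norm_triangle_ineq2)
    show ?thesis
    proof (cases "X \<le> 2 * a")
      case True
      then have "X \<le> 2 * a * R" using R a0 by (smt (verit) mult_left_mono mult_cancel_left1)
      moreover have "0 \<le> 4*b*R" using b0 R by simp
      ultimately have "X \<le> 2*a*R + 4*b*R" by linarith
      then show ?thesis unfolding X_def w_def by (simp add: algebra_simps)
    next
      case False
      then have X0: "X > 0" using a0 by linarith
      have "X / 2 \<le> Y" using XY False by linarith
      then have "(X/2)^2 \<le> Y^2" using X0 by (intro power_mono) auto
      then have "X * X \<le> (4 * R * b) * X" using Y2 by (simp add: power2_eq_square algebra_simps)
      then have "X \<le> 4 * b * R" using X0 by (simp add: mult_right_le_imp_le mult.commute mult.left_commute)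
      moreover have "0 \<le> 2*a*R" using a0 R by simp
      ultimately have "X \<le> 2*a*R + 4*b*R" by linarith
      then show ?thesis unfolding X_def w_def by (simp add: algebra_simps)
    qed
  qed
  show ?thesis by (rule that[of "2*a + 4*b"]) (use a0 b0 main in auto)
qed

lemma JC_core:
  assumes hol: "\<Phi> holomorphic_on \<bbbH>" and maps: "\<Phi> ` \<bbbH> \<subseteq> \<bbbH>"
    and A_def: "A = (INF z\<in>\<bbbH>. Im (\<Phi> z) / Im z)"
    and R1: "\<And>k. R k \<ge> 1" and Rlim: "filterlim R at_top sequentially"
  obtains r where "strict_mono r"
    "\<And>K. compact K \<Longrightarrow> K \<subseteq> \<bbbH> \<Longrightarrow> uniform_limit K
        (\<lambda>k v. \<Phi> (of_real (R (r k)) * v) / of_real (R (r k))) (\<lambda>v. of_real A * v) sequentially"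
proof -
  obtain C where C: "C \<ge> 0" "\<And>R. R \<ge> 1 \<Longrightarrow> cmod (\<Phi> (of_real R * \<i>)) \<le> C * R"
    using iR_bound[OF hol maps] by blast
  define F where "F k v = \<Phi> (of_real (R k) * v) / of_real (R k)" for k v
  have iH: "\<i> \<in> \<bbbH>" by (simp add: in_H)
  have R0: "R k > 0" for k using R1[of k] by linarith
  have RvH: "of_real (R k) * v \<in> \<bbbH>" if "v \<in> \<bbbH>" for k v using that R0[of k] by (simp add: in_H)
  have FH: "Im (F k v) > 0" if "v \<in> \<bbbH>" for k v
  proof -
    have "\<Phi> (of_real (R k) * v) \<in> \<bbbH>" using maps RvH[OF that] by blast
    then show ?thesis using R0[of k] by (simp add: F_def in_H)
  qed
  have holF: "F k holomorphic_on \<bbbH>" for k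
  proof -
    have "(\<Phi> \<circ> (\<lambda>v. of_real (R k) * v)) holomorphic_on \<bbbH>"
      by (rule holomorphic_on_compose_gen[OF _ hol]) (auto intro!: holomorphic_intros RvH)
    then show ?thesis unfolding F_def using R0[of k] by (intro holomorphic_intros) (auto simp: o_def)
  qed
  have Fi: "cmod (F k \<i>) \<le> C" for k
  proof -
    have "cmod (\<Phi> (of_real (R k) * \<i>)) \<le> C * R k" by (rule C(2)[OF R1])
    then show ?thesis using R0[of k] by (simp add: F_def norm_divide divide_le_eq)
  qed
  have Fbd: "cmod (F k v) \<le> C * (2 + (cmod (v - \<i>))^2 / Im v)" if v: "v \<in> \<bbbH>" for k v
  proof -
    have sp: "(cmod (F k v - F k \<i>))^2 * (Im v * Im \<i>) \<le> (cmod (v - \<i>))^2 * (Im (F k v) * Im (F k \<i>))"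
      unfolding F_def by (rule SP_scaled[OF hol maps R0 R0 v iH])
    have v0: "Im v > 0" using v by (simp add: in_H)
    from sp have bp: "(cmod (F k v - F k \<i>))^2 \<le> ((cmod (v - \<i>))^2 / Im v) * (Im (F k v) * Im (F k \<i>))"
      using v0 by (simp add: field_simps)
    have "cmod (F k v) \<le> (2 + (cmod (v - \<i>))^2 / Im v) * cmod (F k \<i>)"
      using bound_pt[OF _ bp] FH[OF v] FH[OF iH] v0 by simp
    also have "\<dots> \<le> (2 + (cmod (v - \<i>))^2 / Im v) * C"
      by (rule mult_left_mono[OF Fi]) (use v0 in simp)
    finally show ?thesis by (simp add: mult.commute)
  qed
  obtain G r where G: "G holomorphic_on \<bbbH>" "strict_mono r"
      "\<And>v. v \<in> \<bbbH> \<Longrightarrow> (\<lambda>k. F (r k) v) \<longlonglongrightarrow> G v"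
      "\<And>K. compact K \<Longrightarrow> K \<subseteq> \<bbbH> \<Longrightarrow> uniform_limit K (F \<circ> r) G sequentially"
    using montel_H[of F C, OF holF Fbd] by metis
  have Rr: "filterlim (\<lambda>k. R (r k)) at_top sequentially"
    using filterlim_compose[OF Rlim filterlim_subseq[OF G(2)]] .
  have ImG: "Im (G v) \<ge> A * Im v" if v: "v \<in> \<bbbH>" for v
  proof -
    have "(\<lambda>k. Im (F (r k) v)) \<longlonglongrightarrow> Im (G v)" using G(3)[OF v] by (rule tendsto_Im)
    moreover have "Im (F (r k) v) \<ge> A * Im v" for k
    proof -
      have "A \<le> Im (\<Phi> (of_real (R (r k)) * v)) / Im (of_real (R (r k)) * v)"
        by (rule A_lower[OF maps A_def RvH[OF v]])
      then show ?thesis using R0[of "r k"] v by (simp add: F_def in_H field_simps)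
    qed
    ultimately show ?thesis by (intro LIMSEQ_le_const) auto
  qed
  have ImGi: "Im (G \<i>) \<le> Im (\<Phi> z) / Im z" if z: "z \<in> \<bbbH>" for z
  proof -
    define b where "b = Im (\<Phi> z)"
    have "\<Phi> z \<in> \<bbbH>" using maps z by blast
    then have b0: "b > 0" by (simp add: b_def in_H)
    have z0: "Im z > 0" using z by (simp add: in_H)
    have ineq: "Im (F k \<i>) \<le> 2 * b / R k + (cmod (\<i> - z / of_real (R k)))^2 * b / Im z" for k
    proof -
      define p where "p = of_real (R k) * \<i>"
      have pH: "p \<in> \<bbbH>" unfolding p_def using RvH[OF iH] .
      define a where "a = Im (\<Phi> p)"
      have "\<Phi> p \<in> \<bbbH>" using maps pH by blast
      then have a0: "a > 0" by (simp add: a_def in_H)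
      have sp: "(cmod (\<Phi> p - \<Phi> z))^2 * (Im p * Im z) \<le> (cmod (p - z))^2 * (Im (\<Phi> p) * Im (\<Phi> z))"
        by (rule SP[OF hol maps z pH])
      have "(a - b)^2 \<le> (cmod (\<Phi> p - \<Phi> z))^2"
      proof -
        have "\<bar>a - b\<bar> \<le> cmod (\<Phi> p - \<Phi> z)" using abs_Im_le_cmod[of "\<Phi> p - \<Phi> z"] by (simp add: a_def b_def)
        then show ?thesis by (metis abs_ge_zero power2_abs power_mono)
      qed
      then have "(a - b)^2 * (R k * Im z) \<le> (cmod (\<Phi> p - \<Phi> z))^2 * (R k * Im z)"
        using R0[of k] z0 by (intro mult_right_mono) auto
      also have "\<dots> \<le> (cmod (p - z))^2 * (a * b)"
        using sp by (simp add: p_def a_def b_def)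
      finally have fin: "(a - b)^2 * (R k * Im z) \<le> (cmod (p - z))^2 * (a * b)" .
      define D where "D = (cmod (p - z))^2 / (R k * Im z)"
      have "(a - b)^2 \<le> D * (a * b)"
        using fin R0[of k] z0 by (simp add: D_def field_simps)
      then have "a \<le> (2 + D) * b" using a0 b0 by (intro quad_bound) auto
      then have "a / R k \<le> (2 + D) * b / R k" using R0[of k] by (simp add: divide_right_mono)
      also have "(2 + D) * b / R k = 2 * b / R k + (cmod (\<i> - z / of_real (R k)))^2 * b / Im z"
      proof -
        have "p - z = of_real (R k) * (\<i> - z / of_real (R k))" using R0[of k] by (simp add: p_def field_simps)
        then have "cmod (p - z) = R k * cmod (\<i> - z / of_real (R k))" using R0[of k] by (simp add: norm_mult)
        then show ?thesis using R0[of k] z0 by (simp add: D_def field_simps power2_eq_square)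
      qed
      finally show ?thesis by (simp add: F_def a_def p_def)
    qed
    have "(\<lambda>k. inverse (R (r k))) \<longlonglongrightarrow> 0" by (rule tendsto_inverse_0_at_top[OF Rr])
    then have "(\<lambda>k. 2 * b * inverse (R (r k)) + (cmod (\<i> - z * of_real (inverse (R (r k)))))^2 * b / Im z)
        \<longlonglongrightarrow> 2 * b * 0 + (cmod (\<i> - z * of_real 0))^2 * b / Im z"
      using z0 by (intro tendsto_intros) auto
    then have lim: "(\<lambda>k. 2 * b / R (r k) + (cmod (\<i> - z / of_real (R (r k))))^2 * b / Im z) \<longlonglongrightarrow> b / Im z"
      by (simp add: divide_inverse)
    have "(\<lambda>k. Im (F (r k) \<i>)) \<longlonglongrightarrow> Im (G \<i>)" using G(3)[OF iH] by (rule tendsto_Im)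
    then have "Im (G \<i>) \<le> b / Im z" using lim ineq by (intro LIMSEQ_le) auto
    then show ?thesis by (simp add: b_def)
  qed
  have ImGi_eq: "Im (G \<i>) = A"
  proof -
    have "Im (G \<i>) \<le> A" by (rule A_greatest[OF A_def ImGi])
    moreover have "Im (G \<i>) \<ge> A" using ImG[OF iH] by simp
    ultimately show ?thesis by simp
  qed
  define E where "E v = G v - of_real A * v" for v
  have holE: "E holomorphic_on \<bbbH>" unfolding E_def using G(1) by (intro holomorphic_intros)
  have nnE: "Im (E v) \<ge> 0" if "v \<in> \<bbbH>" for v using ImG[OF that] by (simp add: E_def)
  have E0: "Im (E \<i>) = 0" using ImGi_eq by (simp add: E_def)
  define q where "q = E \<i>"
  have Gq: "G v = of_real A * v + q" if "v \<in> \<bbbH>" for v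
    using nonneg_Im_const[OF holE nnE iH E0 that] unfolding E_def q_def by (simp add: algebra_simps)
  have Imq: "Im q = 0" using E0 by (simp add: q_def)
  have q0: "q = 0"
  proof (rule ccontr)
    assume qn: "q \<noteq> 0"
    define l where "l = (C + 1) / cmod q"
    have l0: "l > 0" using qn C(1) by (simp add: l_def)
    have viH: "\<i> / of_real l \<in> \<bbbH>" using l0 by (simp add: in_H)
    have t: "(\<lambda>k. cmod (of_real l * F (r k) (\<i> / of_real l))) \<longlonglongrightarrow> cmod (of_real l * G (\<i> / of_real l))"
      by (intro tendsto_intros G(3)[OF viH])
    have ev: "\<forall>\<^sub>F k in sequentially. cmod (of_real l * F (r k) (\<i> / of_real l)) \<le> C"
    proof -
      have "\<forall>\<^sub>F k in sequentially. R (r k) \<ge> l" using Rr by (simp add: filterlim_at_top)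
      then show ?thesis
      proof eventually_elim
        case (elim k)
        have eq: "of_real l * F (r k) (\<i> / of_real l) = \<Phi> (of_real (R (r k) / l) * \<i>) / of_real (R (r k) / l)"
          unfolding F_def using l0 by (simp add: field_simps)
        have ge: "R (r k) / l \<ge> 1" using elim l0 by (simp add: field_simps)
        define S where "S = R (r k) / l"
        have S0: "S > 0" using ge by (simp add: S_def)
        have "cmod (\<Phi> (of_real S * \<i>) / of_real S) = cmod (\<Phi> (of_real S * \<i>)) / S"
          using S0 by (simp add: norm_divide)
        also have "\<dots> \<le> (C * S) / S" using C(2)[OF ge] S0 by (intro divide_right_mono) (auto simp: S_def)
        also have "\<dots> = C" using S0 by simp
        finally show ?case unfolding eq S_def .
      qed
    qed
    have f1: "cmod (of_real l * G (\<i> / of_real l)) \<le> C"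
      using t ev by (intro LIMSEQ_le_const2) (auto simp: eventually_sequentially)
    have f2: "of_real l * G (\<i> / of_real l) = of_real A * \<i> + of_real l * q"
      using Gq[OF viH] l0 by (simp add: field_simps)
    have "cmod (of_real A * \<i> + of_real l * q) \<le> C" using f1 unfolding f2 .
    moreover have "cmod (of_real A * \<i> + of_real l * q) \<ge> l * cmod q"
    proof -
      have "\<bar>Re (of_real A * \<i> + of_real l * q)\<bar> \<le> cmod (of_real A * \<i> + of_real l * q)" by (rule abs_Re_le_cmod)
      moreover have "Re (of_real A * \<i> + of_real l * q) = l * Re q" by simp
      moreover have "cmod q = \<bar>Re q\<bar>" using Imq by (simp add: cmod_eq_Re)
      ultimately show ?thesis using l0 by (simp add: abs_mult)
    qed
    moreover have "l * cmod q = C + 1" using qn by (simp add: l_def)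
    ultimately show False by linarith
  qed
  show ?thesis
  proof (rule that[OF G(2)])
    fix K assume K: "compact K" "K \<subseteq> \<bbbH>"
    have "uniform_limit K (F \<circ> r) G sequentially" by (rule G(4)[OF K])
    moreover have "G v = of_real A * v" if "v \<in> K" for v using Gq[of v] q0 that K(2) by auto
    ultimately show "uniform_limit K (\<lambda>k v. \<Phi> (of_real (R (r k)) * v) / of_real (R (r k))) (\<lambda>v. of_real A * v) sequentially"
      using uniform_limit_cong'[of K "F \<circ> r" "\<lambda>k v. \<Phi> (of_real (R (r k)) * v) / of_real (R (r k))" G "\<lambda>v. of_real A * v"]
      by (simp add: F_def)
  qed
qed

lemma dir_deriv:
  fixes P :: "complex \<Rightarrow> complex"
  assumes "(P has_field_derivative d) (at (a + of_real t * u))"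
  shows "((\<lambda>s. Re (P (a + of_real s * u))) has_real_derivative Re (d * u)) (at t)"
    and "((\<lambda>s. Im (P (a + of_real s * u))) has_real_derivative Im (d * u)) (at t)"
proof -
  have g: "((\<lambda>s. a + of_real s * u) has_derivative (\<lambda>s. of_real s * u)) (at t)"
    by (auto intro!: derivative_eq_intros)
  have c: "((\<lambda>s. P (a + of_real s * u)) has_derivative (\<lambda>s. d * (of_real s * u))) (at t)"
    using has_derivative_compose[OF g assms[unfolded has_field_derivative_def]] by simp
  have "((\<lambda>s. Re (P (a + of_real s * u))) has_derivative (\<lambda>s. Re (d * (of_real s * u)))) (at t)"
    using c by (rule has_derivative_Re)
  moreover have "(\<lambda>s. Re (d * (of_real s * u))) = (*) (Re (d * u))"
    by (rule ext) (simp add: algebra_simps)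
  ultimately show "((\<lambda>s. Re (P (a + of_real s * u))) has_real_derivative Re (d * u)) (at t)"
    unfolding has_field_derivative_def by simp
  have "((\<lambda>s. Im (P (a + of_real s * u))) has_derivative (\<lambda>s. Im (d * (of_real s * u)))) (at t)"
    using c by (rule has_derivative_Im)
  moreover have "(\<lambda>s. Im (d * (of_real s * u))) = (*) (Im (d * u))"
    by (rule ext) (simp add: algebra_simps)
  ultimately show "((\<lambda>s. Im (P (a + of_real s * u))) has_real_derivative Im (d * u)) (at t)"
    unfolding has_field_derivative_def by simp
qed

lemma sin_cos_shift: "sin x = cos (x - pi/2)"
  by (simp add: cos_diff)

lemma H_not_nonpos: "w \<in> \<bbbH> \<Longrightarrow> w \<notin> \<real>\<^sub>\<le>\<^sub>0"
  by (simp add: in_H complex_nonpos_Reals_iff)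

lemma model:
  assumes holG: "G holomorphic_on \<bbbH>" and GH: "\<And>v. v \<in> \<bbbH> \<Longrightarrow> G v \<in> \<bbbH>" and A1: "A > 1"
    and FE: "\<And>v. v \<in> \<bbbH> \<Longrightarrow> G (of_real A * v) = of_real A * G v"
    and SI: "\<And>v. v \<in> \<bbbH> \<Longrightarrow> Im v / cmod v \<le> Im (G v) / cmod (G v)"
  shows "\<exists>\<mu>>0. \<forall>v\<in>\<bbbH>. G v = of_real \<mu> * v"
proof -
  define S where "S = {\<zeta>::complex. 0 < Im \<zeta> \<and> Im \<zeta> < pi}"
  have openS: "open S" unfolding S_def
    by (simp add: open_Collect_conj open_halfspace_Im_gt open_halfspace_Im_lt)
  have "convex S"
  proof -
    have "S = {x. Im x > 0} \<inter> {x. Im x < pi}" by (auto simp: S_def)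
    then show ?thesis using convex_Int[OF convex_halfspace_Im_gt convex_halfspace_Im_lt] by simp
  qed
  then have connS: "connected S" by (rule convex_connected)
  have expH: "exp \<zeta> \<in> \<bbbH>" if "\<zeta> \<in> S" for \<zeta>
    using that by (simp add: S_def in_H Im_exp sin_gt_zero)
  have GeH: "G (exp \<zeta>) \<in> \<bbbH>" if "\<zeta> \<in> S" for \<zeta> using GH[OF expH[OF that]] .
  have Gne: "G (exp \<zeta>) \<noteq> 0" if "\<zeta> \<in> S" for \<zeta> using GeH[OF that] by (auto simp: in_H)
  define P where "P \<zeta> = Ln (G (exp \<zeta>)) - \<zeta>" for \<zeta>
  have holGe: "(\<lambda>\<zeta>. G (exp \<zeta>)) holomorphic_on S"
    using holomorphic_on_compose_gen[OF holomorphic_on_exp holG, of S] expH by (auto simp: o_def)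
  have holP: "P holomorphic_on S"
    unfolding P_def
    by (intro holomorphic_intros holomorphic_on_Ln'[OF _ holGe]) (use GeH H_not_nonpos in auto)
  define T where "T = ln A"
  have T0: "T > 0" using A1 by (simp add: T_def)
  have expT: "exp (of_real T :: complex) = of_real A" using A1 by (simp add: T_def exp_of_real)
  have per: "P (\<zeta> + of_real T) = P \<zeta>" if z: "\<zeta> \<in> S" for \<zeta>
  proof -
    have "exp (\<zeta> + of_real T) = of_real A * exp \<zeta>" by (simp add: exp_add expT mult.commute)
    then have "G (exp (\<zeta> + of_real T)) = of_real A * G (exp \<zeta>)" using FE[OF expH[OF z]] by simp
    then have "Ln (G (exp (\<zeta> + of_real T))) = of_real (ln A) + Ln (G (exp \<zeta>))"
      using Ln_times_of_real[of A "G (exp \<zeta>)"] A1 Gne[OF z] by (simp add: Ln_of_real)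
    then show ?thesis by (simp add: P_def T_def)
  qed
  have ImP: "Im (P \<zeta>) = Arg (G (exp \<zeta>)) - Im \<zeta>" if "\<zeta> \<in> S" for \<zeta>
    using Arg_eq_Im_Ln[OF Gne[OF that]] by (simp add: P_def)
  have sinI: "sin (Im \<zeta>) \<le> sin (Arg (G (exp \<zeta>)))" if z: "\<zeta> \<in> S" for \<zeta>
  proof -
    have "exp \<zeta> \<noteq> 0" by simp
    have "Arg (exp \<zeta>) = Im \<zeta>" using z by (intro Arg_exp) (auto simp: S_def)
    then have "sin (Im \<zeta>) = Im (exp \<zeta>) / cmod (exp \<zeta>)" using sin_Arg[of "exp \<zeta>"] by simp
    also have "\<dots> \<le> Im (G (exp \<zeta>)) / cmod (G (exp \<zeta>))" using SI[OF expH[OF z]] .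
    also have "\<dots> = sin (Arg (G (exp \<zeta>)))" using sin_Arg[OF Gne[OF z]] by simp
    finally show ?thesis .
  qed
  have thr: "0 < Arg (G (exp \<zeta>)) \<and> Arg (G (exp \<zeta>)) < pi" if "\<zeta> \<in> S" for \<zeta>
    using GeH[OF that] Arg_lt_pi by (simp add: in_H)
  have upper: "Im (P \<zeta>) \<le> 0" if z: "\<zeta> \<in> S" and y: "Im \<zeta> \<ge> pi/2" for \<zeta>
  proof (rule ccontr)
    assume "\<not> ?thesis"
    then have gt: "Arg (G (exp \<zeta>)) > Im \<zeta>" using ImP[OF z] by simp
    define th where "th = Arg (G (exp \<zeta>))"
    have "cos (th - pi/2) < cos (Im \<zeta> - pi/2)"
      using gt thr[OF z] y by (subst cos_mono_less_eq) (auto simp: th_def)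
    then have "sin th < sin (Im \<zeta>)" by (simp add: sin_cos_shift)
    with sinI[OF z] show False by (simp add: th_def)
  qed
  have lower: "Im (P \<zeta>) \<ge> 0" if z: "\<zeta> \<in> S" and y: "Im \<zeta> \<le> pi/2" for \<zeta>
  proof (rule ccontr)
    assume "\<not> ?thesis"
    then have lt: "Arg (G (exp \<zeta>)) < Im \<zeta>" using ImP[OF z] by simp
    define th where "th = Arg (G (exp \<zeta>))"
    have "cos (pi/2 - th) < cos (pi/2 - Im \<zeta>)"
      using lt thr[OF z] y z by (subst cos_mono_less_eq) (auto simp: th_def S_def)
    then have "sin th < sin (Im \<zeta>)" by (simp add: sin_cos_eq)
    with sinI[OF z] show False by (simp add: th_def)
  qed
  define b where "b x = \<i> * of_real (pi/2) + of_real x" for x :: real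
  have bS: "b x \<in> S" for x by (simp add: b_def S_def)
  have Imb: "Im (P (b x)) = 0" for x
    using upper[OF bS[of x]] lower[OF bS[of x]] by (simp add: b_def)
  have derP: "(P has_field_derivative deriv P \<zeta>) (at \<zeta>)" if "\<zeta> \<in> S" for \<zeta>
    by (rule holomorphic_derivI[OF holP openS that])
  have ReD: "Re (deriv P (b x)) \<le> 0" for x
  proof (rule ccontr)
    assume "\<not> ?thesis"
    then have pos: "Im (deriv P (b x) * \<i>) > 0" by simp
    have "((\<lambda>s. Im (P (b x + of_real s * \<i>))) has_real_derivative Im (deriv P (b x) * \<i>)) (at 0)"
      using dir_deriv(2)[of P "deriv P (b x)" "b x" 0 \<i>] derP[OF bS[of x]] by simp
    from DERIV_pos_inc_right[OF this pos] obtain d where d: "d > 0"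
      "\<And>h. h > 0 \<Longrightarrow> h < d \<Longrightarrow> Im (P (b x + of_real 0 * \<i>)) < Im (P (b x + of_real (0 + h) * \<i>))"
      by blast
    define h where "h = min (d/2) (pi/4)"
    have h0: "h > 0" "h < d" using d(1) by (auto simp: h_def)
    have "Im (P (b x)) < Im (P (b x + of_real h * \<i>))" using d(2)[OF h0] by simp
    moreover have "b x + of_real h * \<i> \<in> S"
    proof -
      have "h \<le> pi/4" by (simp add: h_def)
      then show ?thesis using h0 pi_gt_zero by (simp add: b_def S_def)
    qed
    moreover have "Im (b x + of_real h * \<i>) \<ge> pi/2" using h0 by (simp add: b_def)
    ultimately show False using upper Imb[of x] by fastforce
  qed
  define f where "f x = Re (P (b x))" for x
  have fder: "(f has_real_derivative Re (deriv P (b x))) (at x)" for x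
  proof -
    have "((\<lambda>s. Re (P (\<i> * of_real (pi/2) + of_real s * 1))) has_real_derivative Re (deriv P (b x) * 1)) (at x)"
      using dir_deriv(1)[of P "deriv P (b x)" "\<i> * of_real (pi/2)" x 1] derP[OF bS[of x]] by (simp add: b_def)
    then show ?thesis unfolding f_def[abs_def] b_def by simp
  qed
  have fmono: "f y \<le> f x" if "x \<le> y" for x y
    using DERIV_nonpos_imp_nonincreasing[OF that] fder ReD by blast
  have fper: "f (x + of_nat n * T) = f x" for x n
  proof (induction n)
    case 0 then show ?case by simp
  next
    case (Suc n)
    have "f (x + of_nat (Suc n) * T) = Re (P (b (x + of_nat n * T) + of_real T))"
      by (simp add: f_def b_def algebra_simps)
    also have "\<dots> = f (x + of_nat n * T)" using per[OF bS] by (simp add: f_def)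
    finally show ?case using Suc by simp
  qed
  have fconst: "f x = f 0" for x
  proof (cases "x \<ge> 0")
    case True
    obtain n where n: "x < of_nat n * T" using ex_less_of_nat_mult[OF T0] by blast
    have "f x \<le> f 0" using fmono True by blast
    moreover have "f (of_nat n * T) \<le> f x" using fmono n by simp
    moreover have "f (of_nat n * T) = f 0" using fper[of 0 n] by simp
    ultimately show ?thesis by simp
  next
    case False
    obtain n where n: "- x < of_nat n * T" using ex_less_of_nat_mult[OF T0] by blast
    have "f 0 \<le> f x" using fmono False by simp
    moreover have "f (x + of_nat n * T) \<le> f 0" using fmono n by simp
    moreover have "f (x + of_nat n * T) = f x" by (rule fper)
    ultimately show ?thesis by simp
  qed
  define c where "c = f 0"
  have Pb: "P (b x) = of_real c" for x
    using fconst[of x] Imb[of x] by (simp add: f_def c_def complex_eq_iff)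
  have Pc: "P \<zeta> = of_real c" if "\<zeta> \<in> S" for \<zeta>
  proof -
    have "(\<lambda>\<zeta>. P \<zeta> - of_real c) \<zeta> = 0"
    proof (rule analytic_continuation[of "\<lambda>\<zeta>. P \<zeta> - of_real c" S "range b" "b 0"])
      show "(\<lambda>\<zeta>. P \<zeta> - of_real c) holomorphic_on S" using holP by (intro holomorphic_intros)
      show "range b \<subseteq> S" using bS by auto
      show "b 0 \<in> S" by (rule bS)
      show "b 0 islimpt range b"
        unfolding islimpt_approachable
      proof (intro allI impI)
        fix e :: real assume e: "e > 0"
        have "b (e/2) \<in> range b" by simp
        moreover have "b (e/2) \<noteq> b 0" using e by (simp add: b_def)
        moreover have "dist (b (e/2)) (b 0) < e" using e by (simp add: b_def dist_norm)
        ultimately show "\<exists>x'\<in>range b. x' \<noteq> b 0 \<and> dist x' (b 0) < e" by blast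
      qed
      show "\<And>z. z \<in> range b \<Longrightarrow> P z - of_real c = 0" using Pb by auto
    qed (use openS connS that in auto)
    then show ?thesis by simp
  qed
  show ?thesis
  proof (intro exI[of _ "exp c"] conjI ballI)
    show "exp c > 0" by simp
    fix v assume v: "v \<in> \<bbbH>"
    have v0: "v \<noteq> 0" using v by (auto simp: in_H)
    have LS: "Ln v \<in> S" using Im_Ln_pos_lt_imp[of v] v by (simp add: S_def in_H)
    have ev: "exp (Ln v) = v" using v0 by simp
    have "Ln (G v) - Ln v = of_real c" using Pc[OF LS] by (simp add: P_def ev)
    then have "Ln (G v) = of_real c + Ln v" by (simp add: algebra_simps)
    then have "exp (Ln (G v)) = exp (of_real c) * v" by (simp add: exp_add ev)
    moreover have "G v \<noteq> 0" using GH[OF v] by (auto simp: in_H)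
    ultimately show "G v = of_real (exp c) * v" by (simp add: exp_of_real)
  qed
qed

lemma max1_lim:
  assumes Rlim: "filterlim R at_top sequentially"
  shows "filterlim (\<lambda>k. max 1 (R k)) at_top sequentially"
    and "\<forall>\<^sub>F k in sequentially. max 1 (R k) = (R k :: real)"
proof -
  show "filterlim (\<lambda>k. max 1 (R k)) at_top sequentially"
    by (rule filterlim_at_top_mono[OF Rlim]) auto
  have "\<forall>\<^sub>F k in sequentially. R k \<ge> 1" using Rlim by (simp add: filterlim_at_top)
  then show "\<forall>\<^sub>F k in sequentially. max 1 (R k) = R k" by eventually_elim simp
qed

lemma cball_in_H:
  assumes "v0 \<in> \<bbbH>" obtains e where "e > 0" "cball v0 e \<subseteq> \<bbbH>"
  using H_open assms open_contains_cball by blast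

lemma ev_in_cball:
  assumes "v \<longlonglongrightarrow> v0" "e > 0"
  shows "\<forall>\<^sub>F k in sequentially. v k \<in> cball v0 e"
proof -
  have "\<forall>\<^sub>F k in sequentially. dist (v k) v0 < e" using tendstoD[OF assms] .
  then show ?thesis by eventually_elim (simp add: dist_commute)
qed

lemma JC_core_ex:
  assumes hol: "\<Phi> holomorphic_on \<bbbH>" and maps: "\<Phi> ` \<bbbH> \<subseteq> \<bbbH>"
    and A_def: "A = (INF z\<in>\<bbbH>. Im (\<Phi> z) / Im z)"
    and R1: "\<And>k. R k \<ge> 1" and Rlim: "filterlim R at_top sequentially"
  shows "\<exists>r. strict_mono r \<and> (\<forall>K. compact K \<longrightarrow> K \<subseteq> \<bbbH> \<longrightarrow> uniform_limit K
        (\<lambda>k v. \<Phi> (of_real (R (r k)) * v) / of_real (R (r k))) (\<lambda>v. of_real A * v) sequentially)"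
  apply (rule JC_core[OF hol maps A_def R1 Rlim])
  apply blast
  done

lemma JC_seq:
  assumes hol: "\<Phi> holomorphic_on \<bbbH>" and maps: "\<Phi> ` \<bbbH> \<subseteq> \<bbbH>"
    and A_def: "A = (INF z\<in>\<bbbH>. Im (\<Phi> z) / Im z)"
    and Rlim: "filterlim R at_top sequentially" and v: "v \<longlonglongrightarrow> v0" and v0: "v0 \<in> \<bbbH>"
  shows "(\<lambda>k. \<Phi> (of_real (R k) * v k) / of_real (R k)) \<longlonglongrightarrow> of_real A * v0"
proof -
  define R' where "R' k = max 1 (R k)" for k
  have R'1: "R' k \<ge> 1" for k by (simp add: R'_def)
  have R'lim: "filterlim R' at_top sequentially" unfolding R'_def[abs_def] using max1_lim(1)[OF Rlim] .
  have ev: "\<forall>\<^sub>F k in sequentially. R' k = R k" unfolding R'_def using max1_lim(2)[OF Rlim] .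
  obtain e where e: "e > 0" "cball v0 e \<subseteq> \<bbbH>" using cball_in_H[OF v0] by blast
  have main: "(\<lambda>k. \<Phi> (of_real (R' k) * v k) / of_real (R' k)) \<longlonglongrightarrow> of_real A * v0"
  proof (rule subseq_crit)
    fix r :: "nat \<Rightarrow> nat" assume r: "strict_mono r"
    define Q where "Q = R' \<circ> r"
    have R1r: "Q k \<ge> 1" for k using R'1 by (simp add: Q_def)
    have Rlr: "filterlim Q at_top sequentially"
      using filterlim_compose[OF R'lim filterlim_subseq[OF r]] by (simp add: o_def Q_def)
    from JC_core_ex[OF hol maps A_def R1r Rlr] obtain r' where r'0: "strict_mono r'"
      "\<forall>K. compact K \<longrightarrow> K \<subseteq> \<bbbH> \<longrightarrow> uniform_limit K
        (\<lambda>k w. \<Phi> (of_real (Q (r' k)) * w) / of_real (Q (r' k))) (\<lambda>w. of_real A * w) sequentially"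
      by blast
    note r' = r'0[unfolded Q_def]
    have ul: "uniform_limit (cball v0 e)
        (\<lambda>k w. \<Phi> (of_real ((R' \<circ> r) (r' k)) * w) / of_real ((R' \<circ> r) (r' k))) (\<lambda>w. of_real A * w) sequentially"
      using r'(2) e by (simp add: o_def)
    have vl: "(v \<circ> r \<circ> r') \<longlonglongrightarrow> v0"
      using LIMSEQ_subseq_LIMSEQ[OF LIMSEQ_subseq_LIMSEQ[OF v r] r'(1)] .
    have evK: "\<forall>\<^sub>F k in sequentially. (v \<circ> r \<circ> r') k \<in> cball v0 e" by (rule ev_in_cball[OF vl e(1)])
    have "(\<lambda>k. (\<lambda>k w. \<Phi> (of_real ((R' \<circ> r) (r' k)) * w) / of_real ((R' \<circ> r) (r' k))) k ((v \<circ> r \<circ> r') k))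
        \<longlonglongrightarrow> (\<lambda>w. of_real A * w) v0"
      by (rule ulim_seq[OF ul vl evK]) (intro continuous_intros)
    then have "((\<lambda>k. \<Phi> (of_real (R' k) * v k) / of_real (R' k)) \<circ> r \<circ> r') \<longlonglongrightarrow> of_real A * v0"
      by (simp add: o_def)
    then show "\<exists>r'. strict_mono r' \<and> ((\<lambda>k. \<Phi> (of_real (R' k) * v k) / of_real (R' k)) \<circ> r \<circ> r') \<longlonglongrightarrow> of_real A * v0"
      using r'(1) by blast
  qed
  have "\<forall>\<^sub>F k in sequentially. \<Phi> (of_real (R' k) * v k) / of_real (R' k) = \<Phi> (of_real (R k) * v k) / of_real (R k)"
    using ev by eventually_elim simp
  with main show ?thesis by (rule Lim_transform_eventually)
qed

lemma norm_scale_sub: "cmod (of_real a * x - x) = \<bar>a - 1\<bar> * cmod x"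
proof -
  have "of_real a * x - x = of_real (a - 1) * x" by (simp add: algebra_simps)
  then show ?thesis by (simp only: norm_mult norm_of_real)
qed

lemma SCAL_core:
  assumes hol: "\<Phi> holomorphic_on \<bbbH>" and maps: "\<Phi> ` \<bbbH> \<subseteq> \<bbbH>"
    and A_def: "A = (INF z\<in>\<bbbH>. Im (\<Phi> z) / Im z)" and A1: "A > 1"
    and shol: "\<sigma> holomorphic_on \<bbbH>" and smaps: "\<sigma> ` \<bbbH> \<subseteq> \<bbbH>"
    and seq: "\<forall>z\<in>\<bbbH>. \<sigma> (\<Phi> z) = of_real A * \<sigma> z"
    and R1: "\<And>k. R k \<ge> 1" and Rlim: "filterlim R at_top sequentially"
  shows "\<exists>r. strict_mono r \<and> (\<forall>K. compact K \<longrightarrow> K \<subseteq> \<bbbH> \<longrightarrow> uniform_limit K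
        (\<lambda>k v. \<sigma> (of_real (R (r k)) * v) / of_real (cmod (\<sigma> (of_real (R (r k)) * \<i>)))) (\<lambda>v. v) sequentially)"
proof -
  define N where "N k = cmod (\<sigma> (of_real (R k) * \<i>))" for k
  have iH: "\<i> \<in> \<bbbH>" by (simp add: in_H)
  have R0: "R k > 0" for k using R1[of k] by linarith
  have RvH: "of_real (R k) * v \<in> \<bbbH>" if "v \<in> \<bbbH>" for k v using that R0[of k] by (simp add: in_H)
  have sH: "\<sigma> w \<in> \<bbbH>" if "w \<in> \<bbbH>" for w using smaps that by blast
  have N0: "N k > 0" for k
  proof -
    have "Im (\<sigma> (of_real (R k) * \<i>)) > 0" using sH[OF RvH[OF iH]] by (simp add: in_H)
    then show ?thesis by (auto simp: N_def)
  qed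
  define F where "F k v = \<sigma> (of_real (R k) * v) / of_real (N k)" for k v
  have FH: "Im (F k v) > 0" if "v \<in> \<bbbH>" for k v
    using sH[OF RvH[OF that]] N0[of k] by (simp add: F_def in_H)
  have holF: "F k holomorphic_on \<bbbH>" for k
  proof -
    have "(\<sigma> \<circ> (\<lambda>v. of_real (R k) * v)) holomorphic_on \<bbbH>"
      by (rule holomorphic_on_compose_gen[OF _ shol]) (auto intro!: holomorphic_intros RvH)
    then show ?thesis unfolding F_def using N0[of k] by (intro holomorphic_intros) (auto simp: o_def)
  qed
  have Fi: "cmod (F k \<i>) = 1" for k using N0[of k] by (simp add: F_def N_def norm_divide)
  have Fbd: "cmod (F k v) \<le> 1 * (2 + (cmod (v - \<i>))^2 / Im v)" if v: "v \<in> \<bbbH>" for k v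
  proof -
    have sp: "(cmod (F k v - F k \<i>))^2 * (Im v * Im \<i>) \<le> (cmod (v - \<i>))^2 * (Im (F k v) * Im (F k \<i>))"
      unfolding F_def by (rule SP_scaled[OF shol smaps R0 N0 v iH])
    have v0: "Im v > 0" using v by (simp add: in_H)
    from sp have bp: "(cmod (F k v - F k \<i>))^2 \<le> ((cmod (v - \<i>))^2 / Im v) * (Im (F k v) * Im (F k \<i>))"
      using v0 by (simp add: field_simps)
    have "cmod (F k v) \<le> (2 + (cmod (v - \<i>))^2 / Im v) * cmod (F k \<i>)"
      using bound_pt[OF _ bp] FH[OF v] FH[OF iH] v0 by simp
    then show ?thesis using Fi[of k] by simp
  qed
  obtain G r where G: "G holomorphic_on \<bbbH>" "strict_mono r"
      "\<And>v. v \<in> \<bbbH> \<Longrightarrow> (\<lambda>k. F (r k) v) \<longlonglongrightarrow> G v"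
      "\<And>K. compact K \<Longrightarrow> K \<subseteq> \<bbbH> \<Longrightarrow> uniform_limit K (F \<circ> r) G sequentially"
    using montel_H[of F 1, OF holF Fbd] by metis
  have Rr: "filterlim (\<lambda>k. R (r k)) at_top sequentially"
    using filterlim_compose[OF Rlim filterlim_subseq[OF G(2)]] .
  have JCr: "(\<lambda>k. \<Phi> (of_real (R (r k)) * v) / of_real (R (r k))) \<longlonglongrightarrow> of_real A * v" if v: "v \<in> \<bbbH>" for v
    using JC_seq[OF hol maps A_def Rr tendsto_const v] .
  have ImG0: "Im (G v) \<ge> 0" if v: "v \<in> \<bbbH>" for v
  proof -
    have "(\<lambda>k. Im (F (r k) v)) \<longlonglongrightarrow> Im (G v)" using G(3)[OF v] by (rule tendsto_Im)
    then show ?thesis using FH[OF v] by (intro LIMSEQ_le_const) (auto intro: less_imp_le)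
  qed
  have yH: "\<Phi> (of_real (R k) * v) / of_real (R k) \<in> \<bbbH>" if v: "v \<in> \<bbbH>" for k v
  proof -
    have "\<Phi> (of_real (R k) * v) \<in> \<bbbH>" using maps RvH[OF v] by blast
    then show ?thesis using R0[of k] by (simp add: in_H)
  qed
  have sy: "\<sigma> (of_real (R k) * (\<Phi> (of_real (R k) * v) / of_real (R k))) / of_real (N k) = of_real A * F k v"
    if v: "v \<in> \<bbbH>" for k v
  proof -
    have "of_real (R k) * (\<Phi> (of_real (R k) * v) / of_real (R k)) = \<Phi> (of_real (R k) * v)"
      using R0[of k] by simp
    then show ?thesis using seq RvH[OF v] by (simp add: F_def)
  qed
  have KI: "(cmod (G v))^2 * (Im v)^2 \<le> (cmod v)^2 * (Im (G v))^2" if v: "v \<in> \<bbbH>" for v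
  proof -
    define X where "X k = F (r k) v" for k
    define Y where "Y k = \<Phi> (of_real (R (r k)) * v) / of_real (R (r k))" for k
    have ineq: "(cmod (of_real A * X k - X k))^2 * (Im (Y k) * Im v)
        \<le> (cmod (Y k - v))^2 * (Im (of_real A * X k) * Im (X k))" for k
    proof -
      have "(cmod (\<sigma> (of_real (R (r k)) * Y k) / of_real (N (r k)) - \<sigma> (of_real (R (r k)) * v) / of_real (N (r k))))^2 * (Im (Y k) * Im v)
        \<le> (cmod (Y k - v))^2 * (Im (\<sigma> (of_real (R (r k)) * Y k) / of_real (N (r k))) * Im (\<sigma> (of_real (R (r k)) * v) / of_real (N (r k))))"
        unfolding Y_def by (rule SP_scaled[OF shol smaps R0 N0 yH[OF v] v])
      moreover have e1: "\<sigma> (of_real (R (r k)) * Y k) / of_real (N (r k)) = of_real A * X k"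
        unfolding Y_def X_def by (rule sy[OF v])
      moreover have e2: "\<sigma> (of_real (R (r k)) * v) / of_real (N (r k)) = X k"
        unfolding X_def F_def ..
      ultimately show ?thesis by simp
    qed
    have XL: "X \<longlonglongrightarrow> G v" unfolding X_def using G(3)[OF v] .
    have YL: "Y \<longlonglongrightarrow> of_real A * v" unfolding Y_def using JCr[OF v] .
    have lim1: "(\<lambda>k. (cmod (of_real A * X k - X k))^2 * (Im (Y k) * Im v))
        \<longlonglongrightarrow> (cmod (of_real A * G v - G v))^2 * (Im (of_real A * v) * Im v)"
      by (intro tendsto_intros XL YL)
    have lim2: "(\<lambda>k. (cmod (Y k - v))^2 * (Im (of_real A * X k) * Im (X k)))
        \<longlonglongrightarrow> (cmod (of_real A * v - v))^2 * (Im (of_real A * G v) * Im (G v))"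
      by (intro tendsto_intros XL YL)
    have le: "(cmod (of_real A * G v - G v))^2 * (Im (of_real A * v) * Im v)
        \<le> (cmod (of_real A * v - v))^2 * (Im (of_real A * G v) * Im (G v))"
      using lim1 lim2 ineq by (intro LIMSEQ_le) auto
    have c1: "cmod (of_real A * G v - G v) = (A - 1) * cmod (G v)"
      using norm_scale_sub[of A "G v"] A1 by simp
    have c2: "cmod (of_real A * v - v) = (A - 1) * cmod v"
      using norm_scale_sub[of A v] A1 by simp
    have "((A - 1)^2 * A) * ((cmod (G v))^2 * (Im v)^2) \<le> ((A - 1)^2 * A) * ((cmod v)^2 * (Im (G v))^2)"
      using le unfolding c1 c2 by (simp add: power_mult_distrib power2_eq_square algebra_simps)
    moreover have "(A - 1)^2 * A > 0" using A1 by simp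
    ultimately show ?thesis by (rule mult_left_le_imp_le)
  qed
  have cGi: "cmod (G \<i>) = 1"
  proof -
    have "(\<lambda>k. cmod (F (r k) \<i>)) \<longlonglongrightarrow> cmod (G \<i>)" by (intro tendsto_intros G(3)[OF iH])
    moreover have "(\<lambda>k. cmod (F (r k) \<i>)) \<longlonglongrightarrow> 1" using Fi by simp
    ultimately show ?thesis by (rule LIMSEQ_unique)
  qed
  have Gi: "G \<i> = \<i>"
  proof -
    have "1 \<le> (Im (G \<i>))^2" using KI[OF iH] cGi by simp
    moreover have "Im (G \<i>) \<ge> 0" using ImG0[OF iH] .
    moreover have "Im (G \<i>) \<le> 1" using abs_Im_le_cmod[of "G \<i>"] cGi by simp
    ultimately have im1: "Im (G \<i>) = 1"
    proof -
      assume a: "1 \<le> (Im (G \<i>))^2" "Im (G \<i>) \<ge> 0" "Im (G \<i>) \<le> 1"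
      have "Im (G \<i>) * Im (G \<i>) \<le> 1 * Im (G \<i>)" using a(3) a(2) by (rule mult_right_mono)
      then show ?thesis using a by (simp add: power2_eq_square)
    qed
    have "(Re (G \<i>))^2 + (Im (G \<i>))^2 = 1" using cGi cmod_power2[of "G \<i>"] by simp
    then have "Re (G \<i>) = 0" using im1 by simp
    then show ?thesis using im1 by (simp add: complex_eq_iff)
  qed
  have GH: "G v \<in> \<bbbH>" if v: "v \<in> \<bbbH>" for v
  proof (rule ccontr)
    assume "G v \<notin> \<bbbH>"
    then have "Im (G v) = 0" using ImG0[OF v] by (simp add: in_H)
    then have "G \<i> = G v" using nonneg_Im_const[of G v \<i>] G(1) ImG0 v iH by blast
    then have "Im (G \<i>) = 0" using \<open>Im (G v) = 0\<close> by simp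
    then show False using Gi by simp
  qed
  have FE: "G (of_real A * v) = of_real A * G v" if v: "v \<in> \<bbbH>" for v
  proof -
    define w where "w = of_real A * v"
    have wH: "w \<in> \<bbbH>" using v A1 by (simp add: w_def in_H)
    define X where "X k = F (r k) v" for k
    define X' where "X' k = F (r k) w" for k
    define Y where "Y k = \<Phi> (of_real (R (r k)) * v) / of_real (R (r k))" for k
    have ineq: "(cmod (X' k - of_real A * X k))^2 * (Im w * Im (Y k))
        \<le> (cmod (w - Y k))^2 * (Im (X' k) * Im (of_real A * X k))" for k
    proof -
      have "(cmod (\<sigma> (of_real (R (r k)) * w) / of_real (N (r k)) - \<sigma> (of_real (R (r k)) * Y k) / of_real (N (r k))))^2 * (Im w * Im (Y k))
        \<le> (cmod (w - Y k))^2 * (Im (\<sigma> (of_real (R (r k)) * w) / of_real (N (r k))) * Im (\<sigma> (of_real (R (r k)) * Y k) / of_real (N (r k))))"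
        unfolding Y_def by (rule SP_scaled[OF shol smaps R0 N0 wH yH[OF v]])
      moreover have e1: "\<sigma> (of_real (R (r k)) * Y k) / of_real (N (r k)) = of_real A * X k"
        unfolding Y_def X_def by (rule sy[OF v])
      moreover have e2: "\<sigma> (of_real (R (r k)) * w) / of_real (N (r k)) = X' k"
        unfolding X'_def F_def ..
      ultimately show ?thesis by simp
    qed
    have XL: "X \<longlonglongrightarrow> G v" unfolding X_def using G(3)[OF v] .
    have X'L: "X' \<longlonglongrightarrow> G w" unfolding X'_def using G(3)[OF wH] .
    have YL: "Y \<longlonglongrightarrow> w" unfolding Y_def w_def using JCr[OF v] .
    have lim1: "(\<lambda>k. (cmod (X' k - of_real A * X k))^2 * (Im w * Im (Y k)))
        \<longlonglongrightarrow> (cmod (G w - of_real A * G v))^2 * (Im w * Im w)"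
      by (intro tendsto_intros XL X'L YL)
    have lim2: "(\<lambda>k. (cmod (w - Y k))^2 * (Im (X' k) * Im (of_real A * X k)))
        \<longlonglongrightarrow> (cmod (w - w))^2 * (Im (G w) * Im (of_real A * G v))"
      by (intro tendsto_intros XL X'L YL)
    have le: "(cmod (G w - of_real A * G v))^2 * (Im w * Im w) \<le> (cmod (w - w))^2 * (Im (G w) * Im (of_real A * G v))"
      using lim1 lim2 ineq by (intro LIMSEQ_le) auto
    then have "(cmod (G w - of_real A * G v))^2 * (Im w * Im w) \<le> 0" by simp
    moreover have "Im w * Im w > 0" using wH by (simp add: in_H)
    ultimately have "(cmod (G w - of_real A * G v))^2 \<le> 0"
      using mult_right_le_imp_le[of "(cmod (G w - of_real A * G v))^2" "Im w * Im w" 0] by simp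
    then show ?thesis by (simp add: w_def)
  qed
  have SI: "Im v / cmod v \<le> Im (G v) / cmod (G v)" if v: "v \<in> \<bbbH>" for v
  proof -
    have v0: "Im v > 0" and g0: "Im (G v) > 0" using v GH[OF v] by (auto simp: in_H)
    have n0: "cmod v > 0" "cmod (G v) > 0" using v0 g0 by auto
    have "(cmod (G v) * Im v)^2 \<le> (cmod v * Im (G v))^2"
      using KI[OF v] by (simp add: power_mult_distrib)
    then have le: "cmod (G v) * Im v \<le> cmod v * Im (G v)"
      by (rule power2_le_imp_le) (use n0 g0 in simp)
    have "Im v / cmod v = (cmod (G v) * Im v) / (cmod v * cmod (G v))" using n0 by simp
    also have "\<dots> \<le> (cmod v * Im (G v)) / (cmod v * cmod (G v))"
      using le n0 by (intro divide_right_mono) auto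
    also have "\<dots> = Im (G v) / cmod (G v)" using n0 by simp
    finally show ?thesis .
  qed
  obtain \<mu> where mu: "\<mu> > 0" "\<forall>v\<in>\<bbbH>. G v = of_real \<mu> * v"
    using model[OF G(1) GH A1 FE SI] by blast
  have "of_real \<mu> * \<i> = \<i>" using mu(2) Gi iH by auto
  then have "Im (of_real \<mu> * \<i>) = 1" by simp
  then have "\<mu> = 1" by simp
  then have Gid: "G v = v" if "v \<in> \<bbbH>" for v using mu(2) that by simp
  show ?thesis
  proof (intro exI[of _ r] conjI allI impI)
    show "strict_mono r" by (rule G(2))
    fix K assume K: "compact K" "K \<subseteq> \<bbbH>"
    have "uniform_limit K (F \<circ> r) G sequentially" by (rule G(4)[OF K])
    moreover have "G v = v" if "v \<in> K" for v using Gid that K(2) by auto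
    ultimately show "uniform_limit K (\<lambda>k v. \<sigma> (of_real (R (r k)) * v) / of_real (cmod (\<sigma> (of_real (R (r k)) * \<i>)))) (\<lambda>v. v) sequentially"
      using uniform_limit_cong'[of K "F \<circ> r" "\<lambda>k v. \<sigma> (of_real (R (r k)) * v) / of_real (cmod (\<sigma> (of_real (R (r k)) * \<i>)))" G "\<lambda>v. v"]
      by (simp add: F_def N_def)
  qed
qed

lemma SCAL_seq:
  assumes hol: "\<Phi> holomorphic_on \<bbbH>" and maps: "\<Phi> ` \<bbbH> \<subseteq> \<bbbH>"
    and A_def: "A = (INF z\<in>\<bbbH>. Im (\<Phi> z) / Im z)" and A1: "A > 1"
    and shol: "\<sigma> holomorphic_on \<bbbH>" and smaps: "\<sigma> ` \<bbbH> \<subseteq> \<bbbH>"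
    and seq: "\<forall>z\<in>\<bbbH>. \<sigma> (\<Phi> z) = of_real A * \<sigma> z"
    and Rlim: "filterlim R at_top sequentially" and v: "v \<longlonglongrightarrow> v0" and v0: "v0 \<in> \<bbbH>"
  shows "(\<lambda>k. \<sigma> (of_real (R k) * v k) / of_real (cmod (\<sigma> (of_real (R k) * \<i>)))) \<longlonglongrightarrow> v0"
proof -
  define R' where "R' k = max 1 (R k)" for k
  have R'1: "R' k \<ge> 1" for k by (simp add: R'_def)
  have R'lim: "filterlim R' at_top sequentially" unfolding R'_def[abs_def] using max1_lim(1)[OF Rlim] .
  have ev: "\<forall>\<^sub>F k in sequentially. R' k = R k" unfolding R'_def using max1_lim(2)[OF Rlim] .
  obtain e where e: "e > 0" "cball v0 e \<subseteq> \<bbbH>" using cball_in_H[OF v0] by blast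
  have main: "(\<lambda>k. \<sigma> (of_real (R' k) * v k) / of_real (cmod (\<sigma> (of_real (R' k) * \<i>)))) \<longlonglongrightarrow> v0"
  proof (rule subseq_crit)
    fix r :: "nat \<Rightarrow> nat" assume r: "strict_mono r"
    define Q where "Q = R' \<circ> r"
    have R1r: "Q k \<ge> 1" for k using R'1 by (simp add: Q_def)
    have Rlr: "filterlim Q at_top sequentially"
      using filterlim_compose[OF R'lim filterlim_subseq[OF r]] by (simp add: o_def Q_def)
    from SCAL_core[OF hol maps A_def A1 shol smaps seq R1r Rlr] obtain r' where r'0: "strict_mono r'"
      "\<forall>K. compact K \<longrightarrow> K \<subseteq> \<bbbH> \<longrightarrow> uniform_limit K
        (\<lambda>k w. \<sigma> (of_real (Q (r' k)) * w) / of_real (cmod (\<sigma> (of_real (Q (r' k)) * \<i>)))) (\<lambda>w. w) sequentially"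
      by blast
    note r' = r'0[unfolded Q_def]
    have ul: "uniform_limit (cball v0 e)
        (\<lambda>k w. \<sigma> (of_real ((R' \<circ> r) (r' k)) * w) / of_real (cmod (\<sigma> (of_real ((R' \<circ> r) (r' k)) * \<i>)))) (\<lambda>w. w) sequentially"
      using r'(2) e by (simp add: o_def)
    have vl: "(v \<circ> r \<circ> r') \<longlonglongrightarrow> v0"
      using LIMSEQ_subseq_LIMSEQ[OF LIMSEQ_subseq_LIMSEQ[OF v r] r'(1)] .
    have evK: "\<forall>\<^sub>F k in sequentially. (v \<circ> r \<circ> r') k \<in> cball v0 e" by (rule ev_in_cball[OF vl e(1)])
    have "(\<lambda>k. (\<lambda>k w. \<sigma> (of_real ((R' \<circ> r) (r' k)) * w) / of_real (cmod (\<sigma> (of_real ((R' \<circ> r) (r' k)) * \<i>)))) k ((v \<circ> r \<circ> r') k))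
        \<longlonglongrightarrow> (\<lambda>w. w) v0"
      by (rule ulim_seq[OF ul vl evK]) (intro continuous_intros)
    then have "((\<lambda>k. \<sigma> (of_real (R' k) * v k) / of_real (cmod (\<sigma> (of_real (R' k) * \<i>)))) \<circ> r \<circ> r') \<longlonglongrightarrow> v0"
      by (simp add: o_def)
    then show "\<exists>r'. strict_mono r' \<and> ((\<lambda>k. \<sigma> (of_real (R' k) * v k) / of_real (cmod (\<sigma> (of_real (R' k) * \<i>)))) \<circ> r \<circ> r') \<longlonglongrightarrow> v0"
      using r'(1) by blast
  qed
  have "\<forall>\<^sub>F k in sequentially. \<sigma> (of_real (R' k) * v k) / of_real (cmod (\<sigma> (of_real (R' k) * \<i>)))
      = \<sigma> (of_real (R k) * v k) / of_real (cmod (\<sigma> (of_real (R k) * \<i>)))"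
    using ev by eventually_elim simp
  with main show ?thesis by (rule Lim_transform_eventually)
qed

lemma NGROW:
  assumes hol: "\<Phi> holomorphic_on \<bbbH>" and maps: "\<Phi> ` \<bbbH> \<subseteq> \<bbbH>"
    and A_def: "A = (INF z\<in>\<bbbH>. Im (\<Phi> z) / Im z)" and A1: "A > 1"
    and shol: "\<sigma> holomorphic_on \<bbbH>" and smaps: "\<sigma> ` \<bbbH> \<subseteq> \<bbbH>"
    and seq: "\<forall>z\<in>\<bbbH>. \<sigma> (\<Phi> z) = of_real A * \<sigma> z"
  shows "filterlim (\<lambda>R. cmod (\<sigma> (of_real R * \<i>))) at_top at_top"
proof -
  define N where "N R = cmod (\<sigma> (of_real R * \<i>))" for R :: real
  define c where "c = (1 + A) / 2"
  have c1: "c > 1" "c < A" using A1 by (auto simp: c_def)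
  have sH: "\<sigma> w \<in> \<bbbH>" if "w \<in> \<bbbH>" for w using smaps that by blast
  have Npos: "N R > 0" if "R > 0" for R
  proof -
    have "of_real R * \<i> \<in> \<bbbH>" using that by (simp add: in_H)
    then have "Im (\<sigma> (of_real R * \<i>)) > 0" using sH by (simp add: in_H)
    then show ?thesis by (auto simp: N_def)
  qed
  have N0: "N R \<ge> 0" for R by (simp add: N_def)
  have ratio: "\<exists>R0\<ge>1. \<forall>R\<ge>R0. N (A * R) \<ge> c * N R"
  proof (rule ccontr)
    assume na: "\<not> ?thesis"
    have "\<exists>R. R \<ge> real k + 1 \<and> N (A * R) < c * N R" for k :: nat
    proof -
      have k1: "real k + 1 \<ge> 1" by simp
      have "\<not> (\<forall>R\<ge>real k + 1. N (A * R) \<ge> c * N R)"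
      proof
        assume "\<forall>R\<ge>real k + 1. N (A * R) \<ge> c * N R"
        then have "\<exists>R0\<ge>1. \<forall>R\<ge>R0. N (A * R) \<ge> c * N R" using k1 by blast
        then show False using na by blast
      qed
      then show ?thesis by (auto simp: not_le)
    qed
    then obtain Rs where Rs: "\<And>k. Rs k \<ge> real k + 1" "\<And>k. N (A * Rs k) < c * N (Rs k)" by metis
    have Rl: "filterlim Rs at_top sequentially"
    proof (rule filterlim_at_top_mono[OF filterlim_real_sequentially])
      have "real k \<le> Rs k" for k using Rs(1)[of k] by linarith
      then show "\<forall>\<^sub>F x in sequentially. real x \<le> Rs x" by simp
    qed
    have AiH: "of_real A * \<i> \<in> \<bbbH>" using A1 by (simp add: in_H)
    have "(\<lambda>k. \<sigma> (of_real (Rs k) * (of_real A * \<i>)) / of_real (cmod (\<sigma> (of_real (Rs k) * \<i>)))) \<longlonglongrightarrow> of_real A * \<i>"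
      by (rule SCAL_seq[OF hol maps A_def A1 shol smaps seq Rl tendsto_const AiH])
    then have "(\<lambda>k. cmod (\<sigma> (of_real (Rs k) * (of_real A * \<i>)) / of_real (cmod (\<sigma> (of_real (Rs k) * \<i>))))) \<longlonglongrightarrow> cmod (of_real A * \<i>)"
      by (rule tendsto_norm)
    moreover have "cmod (\<sigma> (of_real (Rs k) * (of_real A * \<i>)) / of_real (cmod (\<sigma> (of_real (Rs k) * \<i>)))) = N (A * Rs k) / N (Rs k)" for k
    proof -
      have e: "of_real (Rs k) * (of_real A * \<i>) = of_real (A * Rs k) * \<i>" by simp
      have "N (Rs k) > 0" using Rs(1)[of k] by (intro Npos) linarith
      then show ?thesis unfolding e by (simp add: N_def norm_divide)
    qed
    moreover have "cmod (of_real A * \<i>) = A" using A1 by (simp add: norm_mult)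
    ultimately have lim: "(\<lambda>k. N (A * Rs k) / N (Rs k)) \<longlonglongrightarrow> A" by simp
    have "\<forall>\<^sub>F k in sequentially. c < N (A * Rs k) / N (Rs k)" using order_tendstoD(1)[OF lim c1(2)] .
    then obtain k where "c < N (A * Rs k) / N (Rs k)" by (auto simp: eventually_sequentially)
    moreover have "N (Rs k) > 0" using Rs(1)[of k] by (intro Npos) linarith
    ultimately show False using Rs(2)[of k] by (simp add: field_simps)
  qed
  then obtain R0 where R0: "R0 \<ge> 1" "\<And>R. R \<ge> R0 \<Longrightarrow> N (A * R) \<ge> c * N R" by blast
  have contN: "continuous_on {R0..A*R0} N"
  proof -
    have cs: "continuous_on \<bbbH> \<sigma>" using shol by (rule holomorphic_on_imp_continuous_on)
    have "continuous_on {R0..A*R0} (\<lambda>R. \<sigma> (of_real R * \<i>))"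
      by (rule continuous_on_compose2[OF cs]) (use R0(1) in \<open>auto intro!: continuous_intros simp: in_H\<close>)
    then show ?thesis unfolding N_def by (intro continuous_intros)
  qed
  have ne: "R0 \<le> A * R0" using A1 R0(1) by simp
  obtain x where x: "x \<in> {R0..A*R0}" "\<And>y. y \<in> {R0..A*R0} \<Longrightarrow> N x \<le> N y"
    using continuous_attains_inf[OF compact_Icc _ contN] ne by auto
  define m where "m = N x"
  have m0: "m > 0" unfolding m_def using x(1) R0(1) by (intro Npos) auto
  have step: "N R \<ge> N (R / A)" if "R / A \<ge> R0" for R
  proof -
    have "N (A * (R / A)) \<ge> c * N (R / A)" by (rule R0(2)[OF that])
    moreover have "c * N (R / A) \<ge> N (R / A)" using c1 N0[of "R/A"] by (simp add: mult_le_cancel_right1)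
    moreover have "A * (R / A) = R" using A1 by simp
    ultimately show ?thesis by simp
  qed
  have base': "\<forall>R. R0 \<le> R \<and> R \<le> A^j * R0 \<longrightarrow> N R \<ge> m" for j
  proof (induction j)
    case 0
    show ?case using x(2) ne by (auto simp: m_def)
  next
    case (Suc j)
    show ?case
    proof (intro allI impI)
      fix R assume R: "R0 \<le> R \<and> R \<le> A^Suc j * R0"
      show "N R \<ge> m"
      proof (cases "R \<le> A * R0")
        case True then show ?thesis using x(2) R by (auto simp: m_def)
      next
        case False
        then have "R / A \<ge> R0" using A1 by (simp add: field_simps)
        moreover have "R / A \<le> A^j * R0" using R A1 by (simp add: field_simps)
        ultimately have "N (R / A) \<ge> m" using Suc.IH by blast
        then show ?thesis using step[OF \<open>R / A \<ge> R0\<close>] by linarith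
      qed
    qed
  qed
  have base: "N R \<ge> m" if "R \<ge> R0" for R
  proof -
    obtain j where "R / R0 < A^j" using real_arch_pow[OF A1] by blast
    then have "R \<le> A^j * R0" using R0(1) by (simp add: field_simps)
    then show ?thesis using base'[of j] that by blast
  qed
  have grow: "N R \<ge> m * c^n" if "R \<ge> A^n * R0" for n R
    using that
  proof (induction n arbitrary: R)
    case 0 then show ?case using base by simp
  next
    case (Suc n)
    have "R / A \<ge> A^n * R0" using Suc.prems A1 by (simp add: field_simps)
    then have IH: "N (R / A) \<ge> m * c^n" by (rule Suc.IH)
    have "A^n \<ge> 1" using A1 by simp
    then have "A^n * R0 \<ge> R0" using R0(1) by (simp add: mult_le_cancel_right1)
    then have RA: "R / A \<ge> R0" using \<open>R / A \<ge> A^n * R0\<close> by linarith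
    have "N (A * (R / A)) \<ge> c * N (R / A)" by (rule R0(2)[OF RA])
    moreover have "A * (R / A) = R" using A1 by simp
    moreover have "c * N (R / A) \<ge> c * (m * c^n)" using IH c1 by simp
    ultimately show ?case by (simp add: algebra_simps)
  qed
  show ?thesis
    unfolding filterlim_at_top N_def[symmetric]
  proof
    fix Z :: real
    obtain n where n: "Z / m < c^n" using real_arch_pow[OF c1(1)] by blast
    then have "Z < m * c^n" using m0 by (simp add: field_simps)
    then have "\<forall>R\<ge>A^n * R0. Z \<le> N R" using grow by (meson less_imp_le order_trans)
    then show "\<forall>\<^sub>F R in at_top. Z \<le> N R" by (auto simp: eventually_at_top_linorder)
  qed
qed

lemma sector_props:
  assumes z: "z \<in> sector \<delta>" and d: "\<delta> > 0"
  shows "\<delta> < pi/2" "z \<noteq> 0" "\<delta> < Arg z" "Arg z < pi - \<delta>" "Im z \<ge> sin \<delta> * cmod z"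
proof -
  have a: "\<bar>Arg z - pi/2\<bar> < pi/2 - \<delta>" using z by (simp add: sector_def)
  show "\<delta> < pi/2" using a by linarith
  show "\<delta> < Arg z" "Arg z < pi - \<delta>" using a by linarith+
  show nz: "z \<noteq> 0"
  proof
    assume "z = 0" then show False using a d by (simp add: Arg_zero)
  qed
  have "cos (pi/2 - \<delta>) < cos \<bar>Arg z - pi/2\<bar>"
    using a d \<open>\<delta> < pi/2\<close> by (subst cos_mono_less_eq) auto
  moreover have "cos (Arg z - pi/2) = cos (pi/2 - Arg z)" by (metis cos_minus minus_diff_eq)
  ultimately have "cos (pi/2 - \<delta>) < cos (pi/2 - Arg z)" by simp
  then have "sin \<delta> < sin (Arg z)"
    by (simp add: sin_cos_eq)
  then have "sin \<delta> < Im z / cmod z" using sin_Arg[OF nz] by simp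
  then show "Im z \<ge> sin \<delta> * cmod z" using nz by (simp add: field_simps)
qed

lemma sector_seq:
  assumes "\<not> (\<forall>\<^sub>F z in sector_at_infinity \<delta>. P z)"
  obtains z where "\<And>k. z k \<in> sector \<delta>" "\<And>k. cmod (z k) \<ge> real k + 1" "\<And>k. \<not> P (z k)"
proof -
  have "\<forall>k::nat. \<exists>x. real k + 1 \<le> norm x \<and> x \<in> sector \<delta> \<and> \<not> P x"
    using assms unfolding sector_at_infinity_def eventually_inf_principal eventually_at_infinity
    by (metis (mono_tags, lifting))
  then obtain z where "\<forall>k. real k + 1 \<le> norm (z k) \<and> z k \<in> sector \<delta> \<and> \<not> P (z k)" by metis
  then show ?thesis using that by blast
qed

lemma sector_subseq:
  assumes z: "\<And>k. z k \<in> sector \<delta>" and zn: "\<And>k. cmod (z k) \<ge> real k + 1" and d: "\<delta> > 0"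
  obtains r w where "strict_mono r" "w \<in> \<bbbH>" "(\<lambda>k. z (r k) / of_real (cmod (z (r k)))) \<longlonglongrightarrow> w"
    "filterlim (\<lambda>k. cmod (z (r k))) at_top sequentially"
proof -
  define u where "u k = z k / of_real (cmod (z k))" for k
  have nz: "z k \<noteq> 0" for k using sector_props(2)[OF z d] .
  have un: "cmod (u k) = 1" for k using nz[of k] by (simp add: u_def norm_divide)
  have "bounded (range u)" using un by (auto simp: bounded_iff intro!: exI[of _ 1])
  then obtain w r where r: "strict_mono r" "(u \<circ> r) \<longlonglongrightarrow> w"
    using bounded_imp_convergent_subsequence by blast
  have sd: "sin \<delta> > 0" using sector_props(1)[OF z[of 0] d] d by (intro sin_gt_zero) auto
  have Imu: "Im (u k) \<ge> sin \<delta>" for k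
    using sector_props(5)[OF z[of k] d] nz[of k] by (simp add: u_def field_simps)
  have "Im w \<ge> sin \<delta>"
    using tendsto_Im[OF r(2)] Imu by (intro LIMSEQ_le_const) (auto simp: o_def)
  then have wH: "w \<in> \<bbbH>" using sd by (simp add: in_H)
  have fl: "filterlim (\<lambda>k. cmod (z (r k))) at_top sequentially"
  proof (rule filterlim_at_top_mono[OF filterlim_real_sequentially])
    have "real k \<le> cmod (z (r k))" for k
    proof -
      have "k \<le> r k" using r(1) by (rule seq_suble)
      then show ?thesis using zn[of "r k"] by linarith
    qed
    then show "\<forall>\<^sub>F x in sequentially. real x \<le> cmod (z (r x))" by simp
  qed
  show ?thesis by (rule that[OF r(1) wH _ fl]) (use r(2) in \<open>simp add: u_def o_def\<close>)
qed

lemma part1: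
  assumes hol: "\<Phi> holomorphic_on \<bbbH>" and maps: "\<Phi> ` \<bbbH> \<subseteq> \<bbbH>"
    and A_def: "A = (INF z\<in>\<bbbH>. Im (\<Phi> z) / Im z)" and A1: "A > 1"
    and shol: "\<sigma> holomorphic_on \<bbbH>" and smaps: "\<sigma> ` \<bbbH> \<subseteq> \<bbbH>"
    and seq: "\<forall>z\<in>\<bbbH>. \<sigma> (\<Phi> z) = of_real A * \<sigma> z"
  shows "Klim_infinity_infinity \<sigma>"
  unfolding Klim_infinity_infinity_def
proof (intro allI impI)
  fix \<delta> :: real assume d: "\<delta> > 0"
  show "filterlim \<sigma> at_infinity (sector_at_infinity \<delta>)"
    unfolding filterlim_at_infinity[OF order_refl]
  proof (intro allI impI)
    fix r :: real assume r: "r > 0"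
    show "\<forall>\<^sub>F z in sector_at_infinity \<delta>. r \<le> cmod (\<sigma> z)"
    proof (rule ccontr)
      assume ne: "\<not> ?thesis"
      obtain z where z: "\<And>k. z k \<in> sector \<delta>" "\<And>k. cmod (z k) \<ge> real k + 1" "\<And>k. \<not> r \<le> cmod (\<sigma> (z k))"
        using sector_seq[OF ne] by blast
      obtain rr w where rr: "strict_mono rr" "w \<in> \<bbbH>" "(\<lambda>k. z (rr k) / of_real (cmod (z (rr k)))) \<longlonglongrightarrow> w"
        "filterlim (\<lambda>k. cmod (z (rr k))) at_top sequentially"
        using sector_subseq[OF z(1) z(2) d] by blast
      define R where "R k = cmod (z (rr k))" for k
      define u where "u k = z (rr k) / of_real (R k)" for k
      have R0: "R k > 0" for k using sector_props(2)[OF z(1) d] by (simp add: R_def)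
      have zR: "z (rr k) = of_real (R k) * u k" for k using R0[of k] by (simp add: u_def)
      have Rl: "filterlim R at_top sequentially" using rr(4) by (simp add: R_def[abs_def])
      have ul: "u \<longlonglongrightarrow> w" using rr(3) by (simp add: u_def[abs_def] R_def)
      have sc: "(\<lambda>k. \<sigma> (of_real (R k) * u k) / of_real (cmod (\<sigma> (of_real (R k) * \<i>)))) \<longlonglongrightarrow> w"
        by (rule SCAL_seq[OF hol maps A_def A1 shol smaps seq Rl ul rr(2)])
      then have sc': "(\<lambda>k. cmod (\<sigma> (z (rr k))) / cmod (\<sigma> (of_real (R k) * \<i>))) \<longlonglongrightarrow> cmod w"
        using tendsto_norm[OF sc] by (simp add: zR norm_divide)
      have w0: "cmod w > 0" using rr(2) by (auto simp: in_H)
      have Nl: "filterlim (\<lambda>k. cmod (\<sigma> (of_real (R k) * \<i>))) at_top sequentially"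
        using filterlim_compose[OF NGROW[OF hol maps A_def A1 shol smaps seq] Rl] .
      have "filterlim (\<lambda>k. cmod (\<sigma> (z (rr k))) / cmod (\<sigma> (of_real (R k) * \<i>)) * cmod (\<sigma> (of_real (R k) * \<i>))) at_top sequentially"
        by (rule filterlim_tendsto_pos_mult_at_top[OF sc' w0 Nl])
      moreover have "cmod (\<sigma> (z (rr k))) / cmod (\<sigma> (of_real (R k) * \<i>)) * cmod (\<sigma> (of_real (R k) * \<i>)) = cmod (\<sigma> (z (rr k)))" for k
      proof -
        have "of_real (R k) * \<i> \<in> \<bbbH>" using R0[of k] by (simp add: in_H)
        then have "\<sigma> (of_real (R k) * \<i>) \<in> \<bbbH>" using smaps by blast
        then have "cmod (\<sigma> (of_real (R k) * \<i>)) > 0" by (auto simp: in_H)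
        then show ?thesis by simp
      qed
      ultimately have "filterlim (\<lambda>k. cmod (\<sigma> (z (rr k)))) at_top sequentially" by simp
      then have "\<forall>\<^sub>F k in sequentially. r \<le> cmod (\<sigma> (z (rr k)))" by (simp add: filterlim_at_top)
      then obtain k where "r \<le> cmod (\<sigma> (z (rr k)))" by (auto simp: eventually_sequentially)
      with z(3) show False by blast
    qed
  qed
qed

lemma part2:
  assumes hol: "\<Phi> holomorphic_on \<bbbH>" and maps: "\<Phi> ` \<bbbH> \<subseteq> \<bbbH>"
    and A_def: "A = (INF z\<in>\<bbbH>. Im (\<Phi> z) / Im z)" and A1: "A > 1"
    and shol: "\<sigma> holomorphic_on \<bbbH>" and smaps: "\<sigma> ` \<bbbH> \<subseteq> \<bbbH>"
    and seq: "\<forall>z\<in>\<bbbH>. \<sigma> (\<Phi> z) = of_real A * \<sigma> z"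
  shows "Klim_infinity (\<lambda>z. Arg (\<sigma> z / z)) 0"
  unfolding Klim_infinity_def
proof (intro allI impI)
  fix \<delta> :: real assume d: "\<delta> > 0"
  show "((\<lambda>z. Arg (\<sigma> z / z)) \<longlongrightarrow> 0) (sector_at_infinity \<delta>)"
  proof (rule tendstoI)
    fix e :: real assume e: "e > 0"
    show "\<forall>\<^sub>F z in sector_at_infinity \<delta>. dist (Arg (\<sigma> z / z)) 0 < e"
    proof (rule ccontr)
      assume ne: "\<not> ?thesis"
      obtain z where z: "\<And>k. z k \<in> sector \<delta>" "\<And>k. cmod (z k) \<ge> real k + 1" "\<And>k. \<not> dist (Arg (\<sigma> (z k) / z k)) 0 < e"
        using sector_seq[OF ne] by blast
      obtain rr w where rr: "strict_mono rr" "w \<in> \<bbbH>" "(\<lambda>k. z (rr k) / of_real (cmod (z (rr k)))) \<longlonglongrightarrow> w"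
        "filterlim (\<lambda>k. cmod (z (rr k))) at_top sequentially"
        using sector_subseq[OF z(1) z(2) d] by blast
      define R where "R k = cmod (z (rr k))" for k
      define u where "u k = z (rr k) / of_real (R k)" for k
      define N where "N k = cmod (\<sigma> (of_real (R k) * \<i>))" for k
      define x where "x k = \<sigma> (of_real (R k) * u k) / of_real (N k)" for k
      have R0: "R k > 0" for k using sector_props(2)[OF z(1) d] by (simp add: R_def)
      have N0: "N k > 0" for k
      proof -
        have "of_real (R k) * \<i> \<in> \<bbbH>" using R0[of k] by (simp add: in_H)
        then have "\<sigma> (of_real (R k) * \<i>) \<in> \<bbbH>" using smaps by blast
        then show ?thesis by (auto simp: in_H N_def)
      qed
      have zR: "z (rr k) = of_real (R k) * u k" for k using R0[of k] by (simp add: u_def)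
      have Rl: "filterlim R at_top sequentially" using rr(4) by (simp add: R_def[abs_def])
      have ul: "u \<longlonglongrightarrow> w" using rr(3) by (simp add: u_def[abs_def] R_def)
      have xl: "x \<longlonglongrightarrow> w" unfolding x_def N_def
        by (rule SCAL_seq[OF hol maps A_def A1 shol smaps seq Rl ul rr(2)])
      have w0: "w \<noteq> 0" using rr(2) by (auto simp: in_H)
      have ql: "(\<lambda>k. x k / u k) \<longlonglongrightarrow> w / w" by (intro tendsto_intros xl ul w0)
      then have ql1: "(\<lambda>k. x k / u k) \<longlonglongrightarrow> 1" using w0 by simp
      have "isCont Arg 1" by (rule continuous_at_Arg) (simp add: complex_nonpos_Reals_iff)
      then have "(\<lambda>k. Arg (x k / u k)) \<longlonglongrightarrow> Arg 1" using ql1 by (rule isCont_tendsto_compose)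
      then have al: "(\<lambda>k. Arg (x k / u k)) \<longlonglongrightarrow> 0" by simp
      have eqA: "Arg (\<sigma> (z (rr k)) / z (rr k)) = Arg (x k / u k)" for k
      proof -
        have eq: "\<sigma> (z (rr k)) / z (rr k) = (x k / u k) * of_real (N k / R k)"
          using R0[of k] N0[of k] by (simp add: x_def zR field_simps)
        have pos: "N k / R k > 0" using R0[of k] N0[of k] by simp
        show ?thesis unfolding eq by (rule Arg_times_of_real2[OF pos])
      qed
      have "\<forall>\<^sub>F k in sequentially. dist (Arg (x k / u k)) 0 < e" using tendstoD[OF al e] .
      then obtain k where "dist (Arg (x k / u k)) 0 < e" by (auto simp: eventually_sequentially)
      with z(3)[of "rr k"] eqA[of k] show False by simp
    qed
  qed
qed

definition hdist :: "complex \<Rightarrow> complex \<Rightarrow> real" where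
  "hdist z w = (cmod (z - w))^2 / (Im z * Im w)"

lemma hdist_SP:
  assumes hol: "f holomorphic_on \<bbbH>" and maps: "f ` \<bbbH> \<subseteq> \<bbbH>" and z: "z \<in> \<bbbH>" and w: "w \<in> \<bbbH>"
  shows "hdist (f z) (f w) \<le> hdist z w"
proof -
  have sp: "(cmod (f z - f w))^2 * (Im z * Im w) \<le> (cmod (z - w))^2 * (Im (f z) * Im (f w))"
    by (rule SP[OF hol maps w z])
  have p1: "Im z * Im w > 0" using z w by (simp add: in_H)
  have "f z \<in> \<bbbH>" "f w \<in> \<bbbH>" using maps z w by blast+
  then have p2: "Im (f z) * Im (f w) > 0" by (simp add: in_H)
  show ?thesis unfolding hdist_def using sp p1 p2 by (simp add: divide_simps mult.commute)
qed

lemma hdist_scale: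
  assumes "R > 0"
  shows "hdist (z / of_real R) (w / of_real R) = hdist z w"
proof -
  have "z / of_real R - w / of_real R = (z - w) / of_real R" by (simp add: diff_divide_distrib)
  then show ?thesis using assms unfolding hdist_def by (simp add: norm_divide power2_eq_square field_simps)
qed

lemma orbit_facts:
  assumes hol: "\<Phi> holomorphic_on \<bbbH>" and maps: "\<Phi> ` \<bbbH> \<subseteq> \<bbbH>"
    and A_def: "A = (INF z\<in>\<bbbH>. Im (\<Phi> z) / Im z)" and A1: "A > 1" and z: "z \<in> \<bbbH>"
  shows "(\<Phi> ^^ n) z \<in> \<bbbH>" and "Im ((\<Phi> ^^ n) z) \<ge> A^n * Im z"
proof -
  have *: "(\<Phi> ^^ n) z \<in> \<bbbH> \<and> Im ((\<Phi> ^^ n) z) \<ge> A^n * Im z"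
  proof (induction n)
    case 0 then show ?case using z by simp
  next
    case (Suc n)
    let ?w = "(\<Phi> ^^ n) z"
    have wH: "?w \<in> \<bbbH>" using Suc by blast
    have "A \<le> Im (\<Phi> ?w) / Im ?w" by (rule A_lower[OF maps A_def wH])
    then have "A * Im ?w \<le> Im (\<Phi> ?w)" using wH by (simp add: in_H field_simps)
    moreover have "A * (A^n * Im z) \<le> A * Im ?w" using Suc A1 by simp
    ultimately show ?case using maps wH by auto
  qed
  show "(\<Phi> ^^ n) z \<in> \<bbbH>" using * by blast
  show "Im ((\<Phi> ^^ n) z) \<ge> A^n * Im z" using * by blast
qed

lemma orbit_step_Im:
  assumes maps: "\<Phi> ` \<bbbH> \<subseteq> \<bbbH>" and A_def: "A = (INF z\<in>\<bbbH>. Im (\<Phi> z) / Im z)" and w: "w \<in> \<bbbH>"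
  shows "A * Im w \<le> Im (\<Phi> w)"
proof -
  have "A \<le> Im (\<Phi> w) / Im w" by (rule A_lower[OF maps A_def w])
  then show ?thesis using w by (simp add: in_H field_simps)
qed

lemma orbit_hd:
  assumes hol: "\<Phi> holomorphic_on \<bbbH>" and maps: "\<Phi> ` \<bbbH> \<subseteq> \<bbbH>" and z: "z \<in> \<bbbH>" and w: "w \<in> \<bbbH>"
  shows "hdist ((\<Phi> ^^ n) z) ((\<Phi> ^^ n) w) \<le> hdist z w"
proof -
  have "((\<Phi> ^^ n) z \<in> \<bbbH> \<and> (\<Phi> ^^ n) w \<in> \<bbbH>) \<and> hdist ((\<Phi> ^^ n) z) ((\<Phi> ^^ n) w) \<le> hdist z w"
  proof (induction n)
    case 0 then show ?case using z w by simp
  next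
    case (Suc n)
    then have H: "(\<Phi> ^^ n) z \<in> \<bbbH>" "(\<Phi> ^^ n) w \<in> \<bbbH>" by auto
    have "hdist (\<Phi> ((\<Phi> ^^ n) z)) (\<Phi> ((\<Phi> ^^ n) w)) \<le> hdist ((\<Phi> ^^ n) z) ((\<Phi> ^^ n) w)"
      by (rule hdist_SP[OF hol maps H])
    then show ?case using Suc maps H by auto
  qed
  then show ?thesis by blast
qed

lemma orbit_eq:
  assumes maps: "\<Phi> ` \<bbbH> \<subseteq> \<bbbH>" and seq: "\<forall>z\<in>\<bbbH>. \<sigma> (\<Phi> z) = of_real A * \<sigma> z" and z: "z \<in> \<bbbH>"
  shows "\<sigma> ((\<Phi> ^^ n) z) = of_real (A^n) * \<sigma> z"
proof -
  have "(\<Phi> ^^ n) z \<in> \<bbbH> \<and> \<sigma> ((\<Phi> ^^ n) z) = of_real (A^n) * \<sigma> z"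
  proof (induction n)
    case 0 then show ?case using z by simp
  next
    case (Suc n)
    then have H: "(\<Phi> ^^ n) z \<in> \<bbbH>" by blast
    have "\<sigma> (\<Phi> ((\<Phi> ^^ n) z)) = of_real A * \<sigma> ((\<Phi> ^^ n) z)" using seq H by blast
    then show ?case using Suc maps H by (auto simp: mult.assoc)
  qed
  then show ?thesis by blast
qed

lemma orbit_sector:
  assumes hol: "\<Phi> holomorphic_on \<bbbH>" and maps: "\<Phi> ` \<bbbH> \<subseteq> \<bbbH>"
    and A_def: "A = (INF z\<in>\<bbbH>. Im (\<Phi> z) / Im z)" and A1: "A > 1" and z: "z \<in> \<bbbH>"
  shows "cmod ((\<Phi> ^^ n) z - z) \<le> (sqrt (hdist (\<Phi> z) z) * A / (A - 1)) * Im ((\<Phi> ^^ n) z)"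
proof -
  define D where "D = hdist (\<Phi> z) z"
  define K where "K = sqrt D * A / (A - 1)"
  have Dnn: "D \<ge> 0"
  proof -
    have "\<Phi> z \<in> \<bbbH>" using maps z by blast
    then show ?thesis using z by (simp add: D_def hdist_def in_H)
  qed
  have H: "(\<Phi> ^^ n) z \<in> \<bbbH>" for n by (rule orbit_facts(1)[OF hol maps A_def A1 z])
  have stepIm: "A * Im ((\<Phi> ^^ n) z) \<le> Im ((\<Phi> ^^ Suc n) z)" for n
    using orbit_step_Im[OF maps A_def H[of n]] by simp
  have Impos: "Im ((\<Phi> ^^ n) z) > 0" for n using H[of n] by (simp add: in_H)
  have onestep: "cmod ((\<Phi> ^^ Suc n) z - (\<Phi> ^^ n) z) \<le> sqrt D * Im ((\<Phi> ^^ Suc n) z)" for n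
  proof -
    define a where "a = (\<Phi> ^^ Suc n) z"
    define b where "b = (\<Phi> ^^ n) z"
    have "a = (\<Phi> ^^ n) (\<Phi> z)" by (simp only: a_def funpow_Suc_right o_apply)
    moreover have "\<Phi> z \<in> \<bbbH>" using maps z by blast
    ultimately have "hdist a b \<le> D" unfolding D_def b_def using orbit_hd[OF hol maps _ z] by auto
    then have "(cmod (a - b))^2 \<le> D * (Im a * Im b)"
      using Impos[of "Suc n"] Impos[of n] by (simp add: hdist_def a_def b_def divide_le_eq mult.commute)
    also have "\<dots> \<le> D * (Im a * Im a)"
    proof -
      have "Im b \<le> A * Im b" using A1 Impos[of n] by (simp add: b_def)
      then have "Im b \<le> Im a" using stepIm[of n] unfolding a_def b_def by linarith
      then show ?thesis using Dnn Impos[of "Suc n"] by (intro mult_left_mono) (auto simp: a_def)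
    qed
    also have "\<dots> = (sqrt D * Im a)^2" using Dnn by (simp add: power2_eq_square)
    finally have "(cmod (a - b))^2 \<le> (sqrt D * Im a)^2" .
    then have "cmod (a - b) \<le> sqrt D * Im a"
      by (rule power2_le_imp_le) (use Dnn Impos[of "Suc n"] in \<open>simp add: a_def\<close>)
    then show ?thesis by (simp add: a_def b_def)
  qed
  have "cmod ((\<Phi> ^^ n) z - z) \<le> K * Im ((\<Phi> ^^ n) z)"
  proof (induction n)
    case 0
    have "K \<ge> 0" using Dnn A1 by (simp add: K_def)
    then show ?case using Impos[of 0] by simp
  next
    case (Suc n)
    have "cmod ((\<Phi> ^^ Suc n) z - z) \<le> cmod ((\<Phi> ^^ Suc n) z - (\<Phi> ^^ n) z) + cmod ((\<Phi> ^^ n) z - z)"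
      using norm_triangle_ineq[of "(\<Phi> ^^ Suc n) z - (\<Phi> ^^ n) z" "(\<Phi> ^^ n) z - z"] by simp
    also have "\<dots> \<le> sqrt D * Im ((\<Phi> ^^ Suc n) z) + K * Im ((\<Phi> ^^ n) z)"
      using onestep[of n] Suc by linarith
    also have "K * Im ((\<Phi> ^^ n) z) \<le> K * (Im ((\<Phi> ^^ Suc n) z) / A)"
    proof -
      have "K \<ge> 0" using Dnn A1 by (simp add: K_def)
      moreover have "Im ((\<Phi> ^^ n) z) \<le> Im ((\<Phi> ^^ Suc n) z) / A" using stepIm[of n] A1 by (simp add: field_simps)
      ultimately show ?thesis by (rule mult_left_mono[rotated])
    qed
    also have "sqrt D * Im ((\<Phi> ^^ Suc n) z) + K * (Im ((\<Phi> ^^ Suc n) z) / A) = K * Im ((\<Phi> ^^ Suc n) z)"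
      using A1 by (simp add: K_def field_simps)
    finally show ?case by simp
  qed
  then show ?thesis by (simp add: K_def D_def)
qed

lemma pair_lemma:
  assumes hol: "\<Phi> holomorphic_on \<bbbH>" and maps: "\<Phi> ` \<bbbH> \<subseteq> \<bbbH>"
    and A_def: "A = (INF z\<in>\<bbbH>. Im (\<Phi> z) / Im z)" and A1: "A > 1"
    and shol: "\<sigma> holomorphic_on \<bbbH>" and smaps: "\<sigma> ` \<bbbH> \<subseteq> \<bbbH>"
    and seq: "\<forall>z\<in>\<bbbH>. \<sigma> (\<Phi> z) = of_real A * \<sigma> z"
    and thol: "\<tau> holomorphic_on \<bbbH>" and tmaps: "\<tau> ` \<bbbH> \<subseteq> \<bbbH>"
    and teq: "\<forall>z\<in>\<bbbH>. \<tau> (\<Phi> z) = of_real A * \<tau> z"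
    and z: "z \<in> \<bbbH>"
  shows "\<exists>\<rho>::nat \<Rightarrow> real. (\<forall>n. \<rho> n > 0) \<and> (\<lambda>n. of_real (\<rho> n) * (\<tau> z / \<sigma> z)) \<longlonglongrightarrow> 1
           \<and> (\<lambda>n. of_real (\<rho> n) * (\<tau> \<i> / \<sigma> \<i>)) \<longlonglongrightarrow> 1"
proof -
  have iH: "\<i> \<in> \<bbbH>" by (simp add: in_H)
  have z0: "Im z > 0" using z by (simp add: in_H)
  define Z where "Z n = (\<Phi> ^^ n) z" for n
  define I where "I n = (\<Phi> ^^ n) \<i>" for n
  define R where "R n = Im (Z n)" for n
  have ZH: "Z n \<in> \<bbbH>" for n unfolding Z_def by (rule orbit_facts(1)[OF hol maps A_def A1 z])
  have IH: "I n \<in> \<bbbH>" for n unfolding I_def by (rule orbit_facts(1)[OF hol maps A_def A1 iH])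
  have R0: "R n > 0" for n using ZH[of n] by (simp add: R_def in_H)
  have RA: "R n \<ge> A^n * Im z" for n unfolding R_def Z_def by (rule orbit_facts(2)[OF hol maps A_def A1 z])
  have Rz: "R n \<ge> Im z" for n
  proof -
    have "A^n \<ge> 1" using A1 by simp
    then have "A^n * Im z \<ge> Im z" using z0 by (simp add: mult_le_cancel_right1)
    then show ?thesis using RA[of n] by linarith
  qed
  define a where "a n = Z n / of_real (R n)" for n
  define b where "b n = I n / of_real (R n)" for n
  have Ima: "Im (a n) = 1" for n using R0[of n] by (simp add: a_def R_def)
  have Imb0: "Im (b n) > 0" for n using R0[of n] IH[of n] by (simp add: b_def in_H)
  define K where "K = sqrt (hdist (\<Phi> z) z) * A / (A - 1)"
  have K0: "K \<ge> 0"
  proof -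
    have "\<Phi> z \<in> \<bbbH>" using maps z by blast
    then have "hdist (\<Phi> z) z \<ge> 0" using z by (simp add: hdist_def in_H)
    then show ?thesis using A1 by (simp add: K_def)
  qed
  have abound: "cmod (a n) \<le> cmod z / Im z + K" for n
  proof -
    have "cmod (Z n - z) \<le> K * R n" unfolding K_def R_def Z_def by (rule orbit_sector[OF hol maps A_def A1 z])
    then have "cmod (Z n) \<le> cmod z + K * R n" using norm_triangle_ineq2[of "Z n" z] by linarith
    then have "cmod (a n) \<le> (cmod z + K * R n) / R n" using R0[of n] by (simp add: a_def norm_divide divide_right_mono)
    also have "\<dots> = cmod z / R n + K" using R0[of n] by (simp add: field_simps)
    also have "cmod z / R n \<le> cmod z / Im z" using Rz[of n] z0 by (intro divide_left_mono) auto
    finally show ?thesis by simp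
  qed
  define D' where "D' = hdist \<i> z"
  have D'0: "D' \<ge> 0" using z0 by (simp add: D'_def hdist_def)
  have hdb: "hdist (b n) (a n) \<le> D'" for n
  proof -
    have "hdist (b n) (a n) = hdist (I n) (Z n)" unfolding a_def b_def using R0[of n] by (rule hdist_scale)
    also have "\<dots> \<le> D'" unfolding I_def Z_def D'_def by (rule orbit_hd[OF hol maps iH z])
    finally show ?thesis .
  qed
  have bineq: "(cmod (b n - a n))^2 \<le> D' * (Im (b n) * Im (a n))" for n
  proof -
    have p: "Im (b n) * Im (a n) > 0" using Imb0[of n] Ima[of n] by simp
    then show ?thesis using hdb[of n] by (simp add: hdist_def divide_le_eq mult.commute)
  qed
  have bbound: "cmod (b n) \<le> (2 + D') * (cmod z / Im z + K)" for n
  proof -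
    have "cmod (b n) \<le> (2 + D') * cmod (a n)"
      by (rule bound_pt[OF D'0 bineq]) (use Ima Imb0 in auto)
    also have "\<dots> \<le> (2 + D') * (cmod z / Im z + K)" using abound[of n] D'0 by (intro mult_left_mono) auto
    finally show ?thesis .
  qed
  have blow: "Im (b n) \<ge> 1 / (2 + D')" for n
  proof -
    have "\<bar>Im (a n - b n)\<bar> \<le> cmod (a n - b n)" by (rule abs_Im_le_cmod)
    then have "(1 - Im (b n))^2 \<le> (cmod (b n - a n))^2"
      using Ima[of n] by (metis abs_ge_zero minus_complex.sel(2) norm_minus_commute power2_abs power_mono)
    also have "\<dots> \<le> D' * (1 * Im (b n))" using bineq[of n] Ima[of n] by simp
    finally have "1 \<le> (2 + D') * Im (b n)" using Imb0[of n] by (intro quad_bound) auto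
    then show ?thesis using D'0 by (simp add: field_simps)
  qed
  have "bounded (range a)"
    unfolding bounded_iff using abound by (intro exI[of _ "cmod z / Im z + K"]) auto
  then obtain \<alpha> r1 where r1: "strict_mono r1" "(a \<circ> r1) \<longlonglongrightarrow> \<alpha>"
    using bounded_imp_convergent_subsequence by blast
  have "bounded (range (b \<circ> r1))"
    unfolding bounded_iff using bbound by (intro exI[of _ "(2 + D') * (cmod z / Im z + K)"]) auto
  then obtain \<beta> r2 where r2: "strict_mono r2" "(b \<circ> r1 \<circ> r2) \<longlonglongrightarrow> \<beta>"
    using bounded_imp_convergent_subsequence by (metis comp_assoc)
  define r where "r = r1 \<circ> r2"
  have r: "strict_mono r" unfolding r_def using r1(1) r2(1) by (rule strict_mono_o)
  have al: "(\<lambda>n. a (r n)) \<longlonglongrightarrow> \<alpha>"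
    using LIMSEQ_subseq_LIMSEQ[OF r1(2) r2(1)] by (simp add: r_def o_def)
  have bl: "(\<lambda>n. b (r n)) \<longlonglongrightarrow> \<beta>" using r2(2) by (simp add: r_def o_def)
  have "Im \<alpha> = 1" using tendsto_Im[OF al] Ima by (simp add: LIMSEQ_const_iff)
  then have aH: "\<alpha> \<in> \<bbbH>" by (simp add: in_H)
  have "Im \<beta> \<ge> 1 / (2 + D')" using tendsto_Im[OF bl] blow by (intro LIMSEQ_le_const) auto
  moreover have "1 / (2 + D') > 0" using D'0 by simp
  ultimately have "Im \<beta> > 0" by linarith
  then have bH: "\<beta> \<in> \<bbbH>" by (simp add: in_H)
  have Rl: "filterlim R at_top sequentially"
    unfolding filterlim_at_top
  proof
    fix X :: real
    obtain n0 where n0: "X / Im z < A^n0" using real_arch_pow[OF A1] by blast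
    have "X \<le> R n" if "n \<ge> n0" for n
    proof -
      have "A^n0 \<le> A^n" using A1 that by (intro power_increasing) auto
      then have "X / Im z \<le> A^n" using n0 by linarith
      then have "X \<le> A^n * Im z" using z0 by (simp add: field_simps)
      then show ?thesis using RA[of n] by linarith
    qed
    then show "\<forall>\<^sub>F n in sequentially. X \<le> R n" by (auto simp: eventually_sequentially)
  qed
  have Rlr: "filterlim (\<lambda>n. R (r n)) at_top sequentially"
    using filterlim_compose[OF Rl filterlim_subseq[OF r]] .
  have Za: "of_real (R n) * a n = Z n" for n using R0[of n] by (simp add: a_def)
  have Ib: "of_real (R n) * b n = I n" for n using R0[of n] by (simp add: b_def)
  define Ns where "Ns n = cmod (\<sigma> (of_real (R (r n)) * \<i>))" for n
  define Nt where "Nt n = cmod (\<tau> (of_real (R (r n)) * \<i>))" for n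
  have RiH: "of_real (R n) * \<i> \<in> \<bbbH>" for n using R0[of n] by (simp add: in_H)
  have Ns0: "Ns n > 0" for n
  proof -
    have "\<sigma> (of_real (R (r n)) * \<i>) \<in> \<bbbH>" using smaps RiH by blast
    then show ?thesis by (auto simp: Ns_def in_H)
  qed
  have Nt0: "Nt n > 0" for n
  proof -
    have "\<tau> (of_real (R (r n)) * \<i>) \<in> \<bbbH>" using tmaps RiH by blast
    then show ?thesis by (auto simp: Nt_def in_H)
  qed
  have l1: "(\<lambda>n. \<sigma> (Z (r n)) / of_real (Ns n)) \<longlonglongrightarrow> \<alpha>"
    using SCAL_seq[OF hol maps A_def A1 shol smaps seq Rlr al aH] by (simp add: Za Ns_def)
  have l2: "(\<lambda>n. \<tau> (Z (r n)) / of_real (Nt n)) \<longlonglongrightarrow> \<alpha>"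
    using SCAL_seq[OF hol maps A_def A1 thol tmaps teq Rlr al aH] by (simp add: Za Nt_def)
  have l3: "(\<lambda>n. \<sigma> (I (r n)) / of_real (Ns n)) \<longlonglongrightarrow> \<beta>"
    using SCAL_seq[OF hol maps A_def A1 shol smaps seq Rlr bl bH] by (simp add: Ib Ns_def)
  have l4: "(\<lambda>n. \<tau> (I (r n)) / of_real (Nt n)) \<longlonglongrightarrow> \<beta>"
    using SCAL_seq[OF hol maps A_def A1 thol tmaps teq Rlr bl bH] by (simp add: Ib Nt_def)
  have a0: "\<alpha> \<noteq> 0" "\<beta> \<noteq> 0" using aH bH by (auto simp: in_H)
  have qeq: "\<tau> ((\<Phi> ^^ m) w) / \<sigma> ((\<Phi> ^^ m) w) = \<tau> w / \<sigma> w" if w: "w \<in> \<bbbH>" for m w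
  proof -
    have "\<sigma> w \<in> \<bbbH>" using smaps w by blast
    then have "\<sigma> w \<noteq> 0" by (auto simp: in_H)
    moreover have "A^m \<noteq> 0" using A1 by simp
    ultimately show ?thesis using orbit_eq[OF maps seq w, of m] orbit_eq[OF maps teq w, of m] A1 by simp
  qed
  define \<rho> where "\<rho> n = Ns n / Nt n" for n
  have rho0: "\<rho> n > 0" for n using Ns0[of n] Nt0[of n] by (simp add: \<rho>_def)
  have key: "of_real (\<rho> n) * (\<tau> w / \<sigma> w) = (\<tau> ((\<Phi> ^^ r n) w) / of_real (Nt n)) / (\<sigma> ((\<Phi> ^^ r n) w) / of_real (Ns n))"
    if w: "w \<in> \<bbbH>" for n w
  proof -
    have "(\<Phi> ^^ r n) w \<in> \<bbbH>" by (rule orbit_facts(1)[OF hol maps A_def A1 w])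
    then have "\<sigma> ((\<Phi> ^^ r n) w) \<in> \<bbbH>" using smaps by blast
    then have "\<sigma> ((\<Phi> ^^ r n) w) \<noteq> 0" by (auto simp: in_H)
    then show ?thesis using qeq[OF w, of "r n"] Ns0[of n] Nt0[of n] by (simp add: \<rho>_def field_simps)
  qed
  have c1: "(\<lambda>n. of_real (\<rho> n) * (\<tau> z / \<sigma> z)) \<longlonglongrightarrow> 1"
  proof -
    have "(\<lambda>n. (\<tau> (Z (r n)) / of_real (Nt n)) / (\<sigma> (Z (r n)) / of_real (Ns n))) \<longlonglongrightarrow> \<alpha> / \<alpha>"
      by (intro tendsto_intros l1 l2 a0)
    then show ?thesis using a0 key[OF z] by (simp add: Z_def)
  qed
  have c2: "(\<lambda>n. of_real (\<rho> n) * (\<tau> \<i> / \<sigma> \<i>)) \<longlonglongrightarrow> 1"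
  proof -
    have "(\<lambda>n. (\<tau> (I (r n)) / of_real (Nt n)) / (\<sigma> (I (r n)) / of_real (Ns n))) \<longlonglongrightarrow> \<beta> / \<beta>"
      by (intro tendsto_intros l3 l4 a0)
    then show ?thesis using a0 key[OF iH] by (simp add: I_def)
  qed
  show ?thesis using rho0 c1 c2 by blast
qed

lemma part3:
  assumes hol: "\<Phi> holomorphic_on \<bbbH>" and maps: "\<Phi> ` \<bbbH> \<subseteq> \<bbbH>"
    and A_def: "A = (INF z\<in>\<bbbH>. Im (\<Phi> z) / Im z)" and A1: "A > 1"
    and shol: "\<sigma> holomorphic_on \<bbbH>" and smaps: "\<sigma> ` \<bbbH> \<subseteq> \<bbbH>"
    and seq: "\<forall>z\<in>\<bbbH>. \<sigma> (\<Phi> z) = of_real A * \<sigma> z"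
    and thol: "\<tau> holomorphic_on \<bbbH>" and tmaps: "\<tau> ` \<bbbH> \<subseteq> \<bbbH>"
    and teq: "\<forall>z\<in>\<bbbH>. \<tau> (\<Phi> z) = of_real A * \<tau> z"
  shows "\<exists>\<mu>::real. \<mu> > 0 \<and> (\<forall>z\<in>\<bbbH>. \<tau> z = of_real \<mu> * \<sigma> z)"
proof -
  have iH: "\<i> \<in> \<bbbH>" by (simp add: in_H)
  define q where "q w = \<tau> w / \<sigma> w" for w
  have sne: "\<sigma> w \<noteq> 0" if "w \<in> \<bbbH>" for w
  proof -
    have "\<sigma> w \<in> \<bbbH>" using smaps that by blast
    then show ?thesis by (auto simp: in_H)
  qed
  have tne: "\<tau> w \<noteq> 0" if "w \<in> \<bbbH>" for w
  proof -
    have "\<tau> w \<in> \<bbbH>" using tmaps that by blast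
    then show ?thesis by (auto simp: in_H)
  qed
  have qi0: "q \<i> \<noteq> 0" using sne[OF iH] tne[OF iH] by (simp add: q_def)
  have rhoL: "(\<lambda>n. of_real (\<rho> n) :: complex) \<longlonglongrightarrow> 1 / q \<i>"
    if "(\<lambda>n. of_real (\<rho> n) * q \<i>) \<longlonglongrightarrow> 1" for \<rho> :: "nat \<Rightarrow> real"
  proof -
    have "(\<lambda>n. of_real (\<rho> n) * q \<i> / q \<i>) \<longlonglongrightarrow> 1 / q \<i>" by (intro tendsto_intros that qi0)
    then show ?thesis using qi0 by simp
  qed
  obtain \<rho>0 where rho0: "\<forall>n. \<rho>0 n > 0" "(\<lambda>n. of_real (\<rho>0 n) * q \<i>) \<longlonglongrightarrow> 1"
    using pair_lemma[OF hol maps A_def A1 shol smaps seq thol tmaps teq iH] unfolding q_def by blast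
  have L: "(\<lambda>n. of_real (\<rho>0 n) :: complex) \<longlonglongrightarrow> 1 / q \<i>" by (rule rhoL[OF rho0(2)])
  have ImL: "Im (1 / q \<i>) = 0"
  proof -
    have "(\<lambda>n. Im (of_real (\<rho>0 n) :: complex)) \<longlonglongrightarrow> Im (1 / q \<i>)" by (rule tendsto_Im[OF L])
    then have "(\<lambda>n. 0::real) \<longlonglongrightarrow> Im (1 / q \<i>)" by simp
    then show ?thesis by (simp add: LIMSEQ_const_iff)
  qed
  have ReL: "Re (1 / q \<i>) \<ge> 0"
  proof -
    have "(\<lambda>n. Re (of_real (\<rho>0 n) :: complex)) \<longlonglongrightarrow> Re (1 / q \<i>)" by (rule tendsto_Re[OF L])
    then have "(\<lambda>n. \<rho>0 n) \<longlonglongrightarrow> Re (1 / q \<i>)" by simp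
    then show ?thesis using rho0(1) by (intro LIMSEQ_le_const) (auto intro: less_imp_le)
  qed
  have Lne: "1 / q \<i> \<noteq> 0" using qi0 by simp
  have ReL0: "Re (1 / q \<i>) > 0"
  proof -
    have "Re (1 / q \<i>) \<noteq> 0" using Lne ImL by (auto simp: complex_eq_iff)
    then show ?thesis using ReL by simp
  qed
  define \<mu> where "\<mu> = 1 / Re (1 / q \<i>)"
  have mu0: "\<mu> > 0" using ReL0 by (simp add: \<mu>_def)
  have qi: "q \<i> = of_real \<mu>"
  proof -
    have "1 / q \<i> = of_real (Re (1 / q \<i>))" using ImL by (simp add: complex_eq_iff)
    have "q \<i> = inverse (1 / q \<i>)" by simp
    also have "\<dots> = inverse (of_real (Re (1 / q \<i>)))" using \<open>1 / q \<i> = _\<close> by simp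
    also have "\<dots> = of_real \<mu>" by (simp add: \<mu>_def inverse_eq_divide)
    finally show ?thesis .
  qed
  have qz: "q z = q \<i>" if z: "z \<in> \<bbbH>" for z
  proof -
    obtain \<rho> where rho: "\<forall>n. \<rho> n > 0" "(\<lambda>n. of_real (\<rho> n) * q z) \<longlonglongrightarrow> 1" "(\<lambda>n. of_real (\<rho> n) * q \<i>) \<longlonglongrightarrow> 1"
      using pair_lemma[OF hol maps A_def A1 shol smaps seq thol tmaps teq z] unfolding q_def by blast
    have "(\<lambda>n. of_real (\<rho> n) :: complex) \<longlonglongrightarrow> 1 / q \<i>" by (rule rhoL[OF rho(3)])
    then have "(\<lambda>n. of_real (\<rho> n) * q z) \<longlonglongrightarrow> 1 / q \<i> * q z" by (intro tendsto_intros)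
    then have "1 / q \<i> * q z = 1" using rho(2) by (rule LIMSEQ_unique)
    then show ?thesis using qi0 by (simp add: field_simps)
  qed
  show ?thesis
  proof (intro exI[of _ \<mu>] conjI ballI)
    show "\<mu> > 0" by (rule mu0)
    fix z assume z: "z \<in> \<bbbH>"
    have "\<tau> z = q z * \<sigma> z" using sne[OF z] by (simp add: q_def)
    then show "\<tau> z = of_real \<mu> * \<sigma> z" using qz[OF z] qi by simp
  qed
qed

theorem proposition2p4:
  fixes \<Phi> \<sigma> :: "complex \<Rightarrow> complex" and A :: real
  assumes \<Phi>_hol: "\<Phi> holomorphic_on \<bbbH>"
    and \<Phi>_maps: "\<Phi> ` \<bbbH> \<subseteq> \<bbbH>"
    and A_def: "A = (INF z\<in>\<bbbH>. Im (\<Phi> z) / Im z)"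
    and A_gt: "A > 1"
    and \<sigma>_hol: "\<sigma> holomorphic_on \<bbbH>"
    and \<sigma>_maps: "\<sigma> ` \<bbbH> \<subseteq> \<bbbH>"
    and \<sigma>_eq: "\<forall>z\<in>\<bbbH>. \<sigma> (\<Phi> z) = of_real A * \<sigma> z"
  shows "Klim_infinity_infinity \<sigma>
    \<and> Klim_infinity (\<lambda>z. Arg (\<sigma> z / z)) 0
    \<and> (\<forall>\<tau>. \<tau> holomorphic_on \<bbbH> \<and> \<tau> ` \<bbbH> \<subseteq> \<bbbH>
            \<and> (\<forall>z\<in>\<bbbH>. \<tau> (\<Phi> z) = of_real A * \<tau> z)
          \<longrightarrow> (\<exists>\<mu>::real. \<mu> > 0 \<and> (\<forall>z\<in>\<bbbH>. \<tau> z = of_real \<mu> * \<sigma> z)))"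
proof (intro conjI allI impI)
  show "Klim_infinity_infinity \<sigma>"
    by (rule part1[OF \<Phi>_hol \<Phi>_maps A_def A_gt \<sigma>_hol \<sigma>_maps \<sigma>_eq])
  show "Klim_infinity (\<lambda>z. Arg (\<sigma> z / z)) 0"
    by (rule part2[OF \<Phi>_hol \<Phi>_maps A_def A_gt \<sigma>_hol \<sigma>_maps \<sigma>_eq])
  fix \<tau> assume t: "\<tau> holomorphic_on \<bbbH> \<and> \<tau> ` \<bbbH> \<subseteq> \<bbbH> \<and> (\<forall>z\<in>\<bbbH>. \<tau> (\<Phi> z) = of_real A * \<tau> z)"
  show "\<exists>\<mu>::real. \<mu> > 0 \<and> (\<forall>z\<in>\<bbbH>. \<tau> z = of_real \<mu> * \<sigma> z)"
    using part3[OF \<Phi>_hol \<Phi>_maps A_def A_gt \<sigma>_hol \<sigma>_maps \<sigma>_eq] t by blast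
qed

end
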